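(* Let $\Delta \subset \mathbb{S}^2$ be an oriented closed disk and let $L_0, L_1 \subset \Delta$ be two non-crossing loops. Let $k \in \{2,3\}$ and let $n_1, \dots, n_k \in L_0$ be distinct points listed in the clockwise order of $L_0$. Let $X$ be a union of some of the open segments $L_0(n_1,n_2), \dots, L_0(n_{k-1},n_k), L_0(n_k,n_1)$. Assume that $\Delta^{\mathrm{in}}_{L_0} \cap \Delta^{\mathrm{in}}_{L_1} = \{n_1,\dots,n_k\} \cup X$. For each $1 \le m \le k$ with $p = 1 + (m \bmod k)$ such that $L_0(n_m,n_p) \not\subseteq X$, define $$Z_m = L_0[n_m,n_p] \cup L_1[n_p,n_m].$$ Then each such $Z_m$ is a (simple) loop that is non-crossing relative to $L_0$ and relative to $L_1$, and for some such $m$ the disk $\Delta^{\mathrm{in}}_{Z_m}$ contains both $\Delta^{\mathrm{in}}_{L_0}$ and $\Delta^{\mathrm{in}}_{L_1}$.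
   Context: $\mathbb{S}^2$ is the unit $2$-sphere; a loop is a subset homeomorphic to $\mathbb{S}^1$. A loop $L$ divides $\mathbb{S}^2$ into two closed regions $\Delta_L^0,\Delta_L^1$, each homeomorphic to a closed disk, meeting in $L$; two loops $L,L'$ are non-crossing if $L\subseteq\Delta^0_{L'}$ or $L\subseteq\Delta^1_{L'}$. For a loop $L$ contained in the closed disk $\Delta$, exactly one of its two regions is contained in $\Delta$; it is denoted $\Delta^{\mathrm{in}}_L$, and the other is $\Delta^{\mathrm{out}}_L$. The orientation of $\Delta$ determines right and left; the clockwise orientation of a loop $L\subset\Delta$ is the direction of travel keeping the interior of $\Delta^{\mathrm{in}}_L$ on the right. For distinct $x,y \in L$, $L[x,y]$ denotes the closed segment of $L$ traversed when travelling along $L$ from $x$ to $y$ in the clockwise orientation of $L$, and $L(x,y)$ denotes its interior (open segment). *)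

theory Defs
  imports "HOL-Complex_Analysis.Winding_Numbers"
begin

definition S2 :: "(real^3) set" where
  "S2 = sphere 0 1"

definition is_loop :: "(real^3) set \<Rightarrow> bool" where
  "is_loop L \<longleftrightarrow> L \<subseteq> S2 \<and> L homeomorphic (sphere (0::complex) 1)"

definition loop_regions :: "(real^3) set \<Rightarrow> (real^3) set set" where
  "loop_regions L = {closure C | C. C \<in> components (S2 - L)}"

definition non_crossing :: "(real^3) set \<Rightarrow> (real^3) set \<Rightarrow> bool" where
  "non_crossing L L' \<longleftrightarrow> (\<exists>D \<in> loop_regions L'. L \<subseteq> D)"

text \<open>An oriented closed disk in the sphere is given by an (orientation-carrying) embedding
  h of the closed unit disk of the complex plane; the disk is h ` cball 0 1, and its
  orientation is the one transported from the standard orientation of the plane.\<close>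
definition oriented_disk :: "(complex \<Rightarrow> real^3) \<Rightarrow> bool" where
  "oriented_disk h \<longleftrightarrow> continuous_on (cball 0 1) h \<and> inj_on h (cball 0 1) \<and> h ` cball 0 1 \<subseteq> S2"

definition disk_in :: "(real^3) set \<Rightarrow> (real^3) set \<Rightarrow> (real^3) set" where
  "disk_in \<Delta> L = (THE D. D \<in> loop_regions L \<and> D \<subseteq> \<Delta>)"

text \<open>Clockwise parametrisations (in the chart h) of a loop L in the oriented disk:
  simple closed curves with image L whose winding number around every point of the
  interior of the inner region is -1, i.e. the interior stays on the right.\<close>
definition cw_param :: "(complex \<Rightarrow> real^3) \<Rightarrow> (real^3) set \<Rightarrow> (real \<Rightarrow> complex) \<Rightarrow> bool" where
  "cw_param h L g \<longleftrightarrow> simple_path g \<and> pathfinish g = pathstart g \<and>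
     path_image g \<subseteq> cball 0 1 \<and> h ` path_image g = L \<and>
     (\<forall>w \<in> cball 0 1. h w \<in> disk_in (h ` cball 0 1) L - L \<longrightarrow> winding_number g w = -1)"

definition cw_closed_seg :: "(complex \<Rightarrow> real^3) \<Rightarrow> (real^3) set \<Rightarrow> real^3 \<Rightarrow> real^3 \<Rightarrow> (real^3) set" where
  "cw_closed_seg h L x y = {p. \<exists>g t s. cw_param h L g \<and> h (pathstart g) = x \<and>
      0 < t \<and> t < 1 \<and> h (g t) = y \<and> 0 \<le> s \<and> s \<le> t \<and> p = h (g s)}"

definition cw_open_seg :: "(complex \<Rightarrow> real^3) \<Rightarrow> (real^3) set \<Rightarrow> real^3 \<Rightarrow> real^3 \<Rightarrow> (real^3) set" where
  "cw_open_seg h L x y = {p. \<exists>g t s. cw_param h L g \<and> h (pathstart g) = x \<and>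
      0 < t \<and> t < 1 \<and> h (g t) = y \<and> 0 < s \<and> s < t \<and> p = h (g s)}"

end

theory Submission
  imports Defs "HOL-Homology.Invariance_of_Domain" "HOL-Analysis.Jordan_Curve"
begin

definition cwp :: "complex set \<Rightarrow> (real \<Rightarrow> complex) \<Rightarrow> bool" where
  "cwp \<gamma> g \<longleftrightarrow> simple_path g \<and> pathfinish g = pathstart g \<and> path_image g = \<gamma> \<and>
     (\<forall>w\<in>inside \<gamma>. winding_number g w = -1)"

lemma sp_inj:
  assumes "simple_path g" "x \<in> {0..1}" "y \<in> {0..1}" "g x = g y" "x < 1" "y < 1"
  shows "x = y"
  using assms unfolding simple_path_def loop_free_def by force

lemma sp_inj2:
  assumes "simple_path g" "x \<in> {0<..<1}" "y \<in> {0..1}" "g x = g y"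
  shows "x = y"
  using assms unfolding simple_path_def loop_free_def by force

lemma sp_neq:
  assumes "simple_path g" "r \<in> {0<..<1}" "a \<in> {0..1}" "r \<noteq> a"
  shows "g r \<noteq> g a"
  using sp_inj2[OF assms(1,2,3)] assms(4) by auto

lemma arc_image_simply_connected:
  fixes c :: "real \<Rightarrow> complex"
  assumes "arc c" shows "simply_connected (path_image c)"
proof -
  have "{0..1::real} homeomorphic path_image c"
    using homeomorphic_arc_image_interval[of c 0 1] assms homeomorphic_sym by auto
  then show ?thesis
    using homeomorphic_simply_connected convex_imp_simply_connected[of "{0..1::real}"] by auto
qed

lemma homotopic_in_arc:
  fixes c :: "real \<Rightarrow> complex"
  assumes "arc c" "path p" "path q" "path_image p \<subseteq> path_image c" "path_image q \<subseteq> path_image c"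
    "pathstart p = pathstart q" "pathfinish p = pathfinish q"
  shows "homotopic_paths (path_image c) p q"
proof -
  have "\<forall>p q. path p \<and> path_image p \<subseteq> path_image c \<and>
                path q \<and> path_image q \<subseteq> path_image c \<and>
                pathstart q = pathstart p \<and> pathfinish q = pathfinish p
                \<longrightarrow> homotopic_paths (path_image c) p q"
    using arc_image_simply_connected[OF assms(1)] unfolding simply_connected_eq_homotopic_paths by blast
  then show ?thesis using assms(2-) by metis
qed

lemma seg_unique:
  assumes g: "cwp \<gamma> g" and g': "cwp \<gamma> g'" and st: "g' 0 = g 0"
    and t: "0 < t" "t < 1" and t': "0 < t'" "t' < 1" and gt: "g' t' = g t"
  shows "g' ` {0..t'} = g ` {0..t}"
proof -
  have sg: "simple_path g" and cg: "pathfinish g = pathstart g" and ig: "path_image g = \<gamma>"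
    and wg: "\<forall>w\<in>inside \<gamma>. winding_number g w = -1" using g by (auto simp: cwp_def)
  have sg': "simple_path g'" and cg': "pathfinish g' = pathstart g'" and ig': "path_image g' = \<gamma>"
    and wg': "\<forall>w\<in>inside \<gamma>. winding_number g' w = -1" using g' by (auto simp: cwp_def)
  have pg: "path g" "path g'" using sg sg' simple_path_imp_path by auto
  define x where "x = g 0"
  define y where "y = g t"
  define Ac where "Ac = g ` {0..t}"
  define Bc where "Bc = g ` {t..1}"
  define A' where "A' = g' ` {0<..<t'}"
  define B' where "B' = g' ` {t'<..<1}"
  have g1: "g 1 = x" using cg by (simp add: x_def pathfinish_def pathstart_def)
  have g'1: "g' 1 = x" using cg' st by (simp add: x_def pathfinish_def pathstart_def)
  have gam: "\<gamma> = g ` {0..1}" using ig by (simp add: path_image_def)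
  have gam': "\<gamma> = g' ` {0..1}" using ig' by (simp add: path_image_def)
  have xy: "x \<noteq> y" using sp_inj[OF sg, of 0 t] t by (auto simp: x_def y_def)
  have AcBc: "Ac \<union> Bc = \<gamma>" unfolding Ac_def Bc_def gam using t
    by (metis atLeastAtMost_iff image_Un ivl_disj_un_two_touch(4) less_eq_real_def)
  have AcBc2: "Ac \<inter> Bc = {x, y}"
  proof
    show "Ac \<inter> Bc \<subseteq> {x, y}"
    proof
      fix z assume "z \<in> Ac \<inter> Bc"
      then obtain a b where a: "a \<in> {0..t}" "z = g a" and b: "b \<in> {t..1}" "z = g b"
        unfolding Ac_def Bc_def by auto
      have ab: "g a = g b" "a \<in> {0..1}" "b \<in> {0..1}" using a b t by auto
      have "a = b \<or> a = 0 \<and> b = 1 \<or> a = 1 \<and> b = 0"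
        using sg ab unfolding simple_path_def loop_free_def by blast
      then have "a = b \<or> a = 0" using a b t by auto
      then show "z \<in> {x,y}" using a b t g1 by (auto simp: x_def y_def)
    qed
    have "g 0 \<in> g ` {0..t}" "g t \<in> g ` {0..t}" "g 1 \<in> g ` {t..1}" "g t \<in> g ` {t..1}"
      using t by auto
    then show "{x, y} \<subseteq> Ac \<inter> Bc" using g1 unfolding Ac_def Bc_def x_def y_def by auto
  qed
  have clA: "closed Ac" "closed Bc" unfolding Ac_def Bc_def using t
    by (auto intro!: compact_imp_closed compact_continuous_image continuous_on_subset[OF pg(1)[unfolded path_def]])
  have A'c: "g' ` {0..t'} = A' \<union> {x, y}"
  proof -
    have "{0..t'} = {0<..<t'} \<union> {0,t'}" using t' by auto
    then show ?thesis using st gt unfolding A'_def x_def y_def by (simp add: image_Un)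
  qed
  have B'c: "g' ` {t'..1} = B' \<union> {x, y}"
  proof -
    have "{t'..1} = {t'<..<1} \<union> {1,t'}" using t' by auto
    then show ?thesis using g'1 gt unfolding B'_def x_def y_def by (simp add: image_Un)
  qed
  have A'B': "g' ` {0..t'} \<union> g' ` {t'..1} = \<gamma>" unfolding gam' using t'
    by (metis atLeastAtMost_iff image_Un ivl_disj_un_two_touch(4) less_eq_real_def)
  have xyA': "x \<notin> A'" "y \<notin> A'" "x \<notin> B'" "y \<notin> B'"
  proof -
    show "x \<notin> A'"
    proof
      assume "x \<in> A'"
      then obtain r where "r \<in> {0<..<t'}" "g' r = g' 0"
        unfolding A'_def x_def st[symmetric] by auto
      then show False using sp_neq[OF sg', of r 0] t' by auto
    qed
    show "x \<notin> B'"
    proof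
      assume "x \<in> B'"
      then obtain r where "r \<in> {t'<..<1}" "g' r = g' 0"
        unfolding B'_def x_def st[symmetric] by auto
      then show False using sp_neq[OF sg', of r 0] t' by auto
    qed
    show "y \<notin> A'"
    proof
      assume "y \<in> A'"
      then obtain r where "r \<in> {0<..<t'}" "g' r = g' t'"
        unfolding A'_def y_def gt[symmetric] by auto
      then show False using sp_neq[OF sg', of r t'] t' by auto
    qed
    show "y \<notin> B'"
    proof
      assume "y \<in> B'"
      then obtain r where "r \<in> {t'<..<1}" "g' r = g' t'"
        unfolding B'_def y_def gt[symmetric] by auto
      then show False using sp_neq[OF sg', of r t'] t' by auto
    qed
  qed
  have A'sub: "A' \<subseteq> \<gamma>" "B' \<subseteq> \<gamma>" unfolding A'_def B'_def gam' using t' by auto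
  have conA': "connected A'" "connected B'" unfolding A'_def B'_def using t'
    by (auto intro!: connected_continuous_image continuous_on_subset[OF pg(2)[unfolded path_def]])
  have split: "S \<subseteq> Ac \<or> S \<subseteq> Bc" if "connected S" "S \<subseteq> \<gamma>" "x \<notin> S" "y \<notin> S" for S
  proof -
    have "(- Bc) \<inter> S = {} \<or> (- Ac) \<inter> S = {}"
    proof (rule connectedD[OF that(1)])
      show "open (- Bc)" "open (- Ac)" using clA by auto
      show "- Bc \<inter> - Ac \<inter> S = {}" using AcBc that(2) by auto
      show "S \<subseteq> - Bc \<union> - Ac" using AcBc2 that(3,4) by auto
    qed
    then show ?thesis by auto
  qed
  have Bne: "g ((t+1)/2) \<in> Bc - Ac"
  proof -
    have "g ((t+1)/2) \<notin> Ac"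
    proof
      assume "g ((t+1)/2) \<in> Ac"
      then obtain a where "a \<in> {0..t}" "g a = g ((t+1)/2)" unfolding Ac_def by auto
      then show False using sp_inj2[OF sg, of "(t+1)/2" a] t by auto
    qed
    then show ?thesis unfolding Bc_def using t by auto
  qed
  have Ane: "g (t/2) \<in> Ac - Bc"
  proof -
    have "g (t/2) \<notin> Bc"
    proof
      assume "g (t/2) \<in> Bc"
      then obtain a where "a \<in> {t..1}" "g a = g (t/2)" unfolding Bc_def by auto
      then show False using sp_inj2[OF sg, of "t/2" a] t by auto
    qed
    then show ?thesis unfolding Ac_def using t by auto
  qed
  consider "A' \<subseteq> Ac" "B' \<subseteq> Bc" | "A' \<subseteq> Bc" "B' \<subseteq> Ac"
  proof -
    have xyAc: "{x,y} \<subseteq> Ac" "{x,y} \<subseteq> Bc" using AcBc2 by auto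
    have 1: "A' \<subseteq> Ac \<or> A' \<subseteq> Bc" using split[OF conA'(1) A'sub(1) xyA'(1,2)] .
    have 2: "B' \<subseteq> Ac \<or> B' \<subseteq> Bc" using split[OF conA'(2) A'sub(2) xyA'(3,4)] .
    have n1: "\<not> (A' \<subseteq> Ac \<and> B' \<subseteq> Ac)"
    proof
      assume "A' \<subseteq> Ac \<and> B' \<subseteq> Ac"
      then have "\<gamma> \<subseteq> Ac" using A'B' A'c B'c xyAc by auto
      then show False using Bne AcBc by auto
    qed
    have n2: "\<not> (A' \<subseteq> Bc \<and> B' \<subseteq> Bc)"
    proof
      assume "A' \<subseteq> Bc \<and> B' \<subseteq> Bc"
      then have "\<gamma> \<subseteq> Bc" using A'B' A'c B'c xyAc by auto
      then show False using Ane AcBc by auto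
    qed
    show ?thesis using 1 2 n1 n2 that by blast
  qed
  then show ?thesis
  proof cases
    case 1
    have "g' ` {0..t'} \<subseteq> Ac" using 1 A'c AcBc2 by auto
    moreover have "Ac \<subseteq> g' ` {0..t'}"
    proof
      fix z assume z: "z \<in> Ac"
      then have "z \<in> g' ` {0..t'} \<or> z \<in> g' ` {t'..1}" using A'B' AcBc by auto
      then show "z \<in> g' ` {0..t'}"
      proof
        assume "z \<in> g' ` {t'..1}"
        then have "z \<in> Bc \<or> z \<in> {x,y}" using B'c 1 by auto
        then have "z \<in> {x,y}" using z AcBc2 by auto
        then show ?thesis using A'c by auto
      qed
    qed
    ultimately show ?thesis unfolding Ac_def by simp
  next
    case 2
    have eA: "g' ` {0..t'} = Bc"
    proof
      show "g' ` {0..t'} \<subseteq> Bc" using 2 A'c AcBc2 by auto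
      show "Bc \<subseteq> g' ` {0..t'}"
      proof
        fix z assume z: "z \<in> Bc"
        then have "z \<in> g' ` {0..t'} \<or> z \<in> g' ` {t'..1}" using A'B' AcBc by auto
        then show "z \<in> g' ` {0..t'}"
        proof
          assume "z \<in> g' ` {t'..1}"
          then have "z \<in> Ac \<or> z \<in> {x,y}" using B'c 2 by auto
          then have "z \<in> {x,y}" using z AcBc2 by auto
          then show ?thesis using A'c by auto
        qed
      qed
    qed
    have eB: "g' ` {t'..1} = Ac"
    proof
      show "g' ` {t'..1} \<subseteq> Ac" using 2 B'c AcBc2 by auto
      show "Ac \<subseteq> g' ` {t'..1}"
      proof
        fix z assume z: "z \<in> Ac"
        then have "z \<in> g' ` {0..t'} \<or> z \<in> g' ` {t'..1}" using A'B' AcBc by auto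
        then show "z \<in> g' ` {t'..1}"
        proof
          assume "z \<in> g' ` {0..t'}"
          then have "z \<in> Bc" using eA by auto
          then have "z \<in> {x,y}" using z AcBc2 by auto
          then show ?thesis using B'c by auto
        qed
      qed
    qed
    obtain w where w: "w \<in> inside \<gamma>"
      using Jordan_inside_outside[OF sg cg] ig by auto
    have wng: "w \<notin> \<gamma>" using w inside_def by auto
    have arcB: "arc (subpath t 1 g)"
      using arc_simple_path_subpath[OF sg, of t 1] t xy g1 by (auto simp: y_def)
    have arcA: "arc (subpath 0 t g)"
      using arc_simple_path_subpath[OF sg, of 0 t] t xy by (auto simp: y_def x_def)
    have piB: "path_image (subpath t 1 g) = Bc" using t by (simp add: path_image_subpath Bc_def)
    have piA: "path_image (subpath 0 t g) = Ac" using t by (simp add: path_image_subpath Ac_def)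
    have pps: "path (subpath t 1 g)" "path (subpath 0 t g)" "path (subpath 0 t' g')" "path (subpath t' 1 g')"
      using pg t t' by auto
    have h1: "homotopic_paths Bc (subpath 0 t' g') (reversepath (subpath t 1 g))"
      using homotopic_in_arc[OF arcB, of "subpath 0 t' g'" "reversepath (subpath t 1 g)"] piB eA pps t t' st gt g1
      by (auto simp: path_image_subpath x_def y_def)
    have h2: "homotopic_paths Ac (subpath t' 1 g') (reversepath (subpath 0 t g))"
      using homotopic_in_arc[OF arcA, of "subpath t' 1 g'" "reversepath (subpath 0 t g)"] piA eB pps t t' st gt g'1
      by (auto simp: path_image_subpath x_def y_def)
    have sAB: "Ac \<subseteq> - {w}" "Bc \<subseteq> - {w}" using AcBc wng by auto
    have e1: "winding_number (subpath 0 t' g') w = winding_number (reversepath (subpath t 1 g)) w"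
      by (rule winding_number_homotopic_paths[OF homotopic_paths_subset[OF h1 sAB(2)]])
    have e2: "winding_number (subpath t' 1 g') w = winding_number (reversepath (subpath 0 t g)) w"
      by (rule winding_number_homotopic_paths[OF homotopic_paths_subset[OF h2 sAB(1)]])
    have wg'': "winding_number g' w = winding_number (subpath 0 t' g') w + winding_number (subpath t' 1 g') w"
      using winding_number_subpath_combine[OF pg(2), of w 0 t' 1] t' wng ig' by simp
    have wg'': "winding_number g w = winding_number (subpath 0 t g) w + winding_number (subpath t 1 g) w"
      using winding_number_subpath_combine[OF pg(1), of w 0 t 1] t wng ig by simp
    have "winding_number (reversepath (subpath t 1 g)) w = - winding_number (subpath t 1 g) w"
      by (rule winding_number_reversepath) (use t pg wng piB AcBc in auto)
    moreover have "winding_number (reversepath (subpath 0 t g)) w = - winding_number (subpath 0 t g) w"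
      by (rule winding_number_reversepath) (use t pg wng piA AcBc in auto)
    ultimately have "winding_number g' w = - winding_number g w"
      using e1 e2 wg'' \<open>winding_number g' w = _\<close> by simp
    then show ?thesis using wg wg' w by simp
  qed
qed

lemma comp2:
  assumes S: "S = P \<union> Q" and PQ: "P \<inter> Q = {}" "P \<noteq> {}" "Q \<noteq> {}" "connected P" "connected Q"
    and oP: "openin (top_of_set S) P" and oQ: "openin (top_of_set S) Q"
  shows "components S = {P, Q}"
proof -
  obtain UP UQ where UP: "open UP" "P = S \<inter> UP" and UQ: "open UQ" "Q = S \<inter> UQ"
    using oP oQ by (auto simp: openin_open)
  have max: "D = C" if C: "C = P \<or> C = Q" and D: "connected D" "C \<subseteq> D" "D \<subseteq> S" for C D
  proof -
    have "\<not> (D \<inter> P \<noteq> {} \<and> D \<inter> Q \<noteq> {})"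
    proof
      assume ne: "D \<inter> P \<noteq> {} \<and> D \<inter> Q \<noteq> {}"
      have "openin (top_of_set D) (D \<inter> UP)" "openin (top_of_set D) (D \<inter> UQ)"
        using UP UQ by (auto intro: openin_open_Int)
      moreover have "D \<inter> UP = D \<inter> P" "D \<inter> UQ = D \<inter> Q" using UP UQ D by auto
      ultimately have o: "openin (top_of_set D) (D \<inter> P)" "openin (top_of_set D) (D \<inter> Q)" by auto
      have "D \<subseteq> (D \<inter> P) \<union> (D \<inter> Q)" using D(3) S by blast
      moreover have "(D \<inter> P) \<inter> (D \<inter> Q) = {}" using PQ(1) by blast
      ultimately show False using D(1) ne o unfolding connected_openin by blast
    qed
    then show ?thesis using C D S PQ(2,3) by blast
  qed
  have cP: "P \<in> components S" unfolding in_components_maximal using PQ S max by auto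
  have cQ: "Q \<in> components S" unfolding in_components_maximal using PQ S max by auto
  show ?thesis
  proof
    show "{P, Q} \<subseteq> components S" using cP cQ by auto
    show "components S \<subseteq> {P, Q}"
    proof
      fix C assume C: "C \<in> components S"
      have "C \<noteq> {}" "C \<subseteq> S" using in_components_nonempty[OF C] in_components_subset[OF C] by auto
      then have "C \<inter> P \<noteq> {} \<or> C \<inter> Q \<noteq> {}" using S by auto
      then show "C \<in> {P, Q}" using components_eq[OF C cP] components_eq[OF C cQ] by auto
    qed
  qed
qed


lemma S2_not_disk:
  assumes "oriented_disk h"
  obtains q where "q \<in> S2" "q \<notin> h ` cball 0 1"
proof -
  have hc: "continuous_on (cball 0 1) h" "inj_on h (cball 0 1)" "h ` cball 0 1 \<subseteq> S2"
    using assms by (auto simp: oriented_disk_def)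
  have "\<not> S2 \<subseteq> h ` cball 0 1"
  proof
    assume "S2 \<subseteq> h ` cball 0 1"
    then have e: "h ` cball 0 1 = S2" using hc by auto
    obtain hi where "homeomorphism (cball (0::complex) 1) (h ` cball 0 1) h hi"
      using homeomorphism_compact[OF compact_cball hc(1) refl hc(2)] by auto
    then have "cball (0::complex) 1 homeomorphic S2" unfolding homeomorphic_def using e by metis
    then have "contractible S2"
      using homeomorphic_contractible convex_imp_contractible[OF convex_cball] by blast
    then show False unfolding S2_def by (simp add: contractible_sphere)
  qed
  then show ?thesis using that by auto
qed

lemma punctured_S2:
  assumes "q \<in> S2"
  obtains F G where "homeomorphism (S2 - {q}) (UNIV :: complex set) F G"
proof -
  obtain c :: "real^3" where c: "c \<in> Basis" by (meson ex_in_conv nonempty_Basis)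
  then have "c \<noteq> 0" by (auto simp: nonzero_Basis)
  then have 1: "(S2 - {q}) homeomorphic {x. c \<bullet> x = 0}"
    using homeomorphic_punctured_sphere_hyperplane[of 1 q 0 c 0] assms by (auto simp: S2_def)
  have "{x::real^3. c \<bullet> x = 0} homeomorphic (UNIV :: complex set)"
    by (rule homeomorphic_affine_sets) (use \<open>c \<noteq> 0\<close> in \<open>auto simp: affine_hyperplane aff_dim_hyperplane\<close>)
  then show ?thesis using 1 homeomorphic_trans that unfolding homeomorphic_def by blast
qed

lemma inside_in_ball:
  fixes \<gamma> :: "complex set"
  assumes "\<gamma> \<subseteq> cball 0 1" "closed \<gamma>"
  shows "inside \<gamma> \<subseteq> ball 0 1"
proof -
  have c: "connected (- cball (0::complex) 1)"
    by (rule connected_complement_bounded_convex) auto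
  have nb: "\<not> bounded (- cball (0::complex) 1)"
  proof
    assume "bounded (- cball (0::complex) 1)"
    then obtain a where a: "\<forall>x\<in>- cball (0::complex) 1. norm x \<le> a" unfolding bounded_iff by auto
    define r where "r = max a 1 + 1"
    have nr: "norm (complex_of_real r) = r" unfolding r_def norm_of_real by simp
    have "complex_of_real r \<in> - cball 0 1" unfolding mem_cball_0 Compl_iff nr r_def by simp
    then have "norm (complex_of_real r) \<le> a" using a by blast
    then show False unfolding nr r_def by simp
  qed
  have "inside \<gamma> \<subseteq> cball 0 1 - \<gamma>"
    by (rule inside_subset[OF c nb]) (use assms in auto)
  then have "inside \<gamma> \<subseteq> cball 0 1" by blast
  then have "inside \<gamma> \<subseteq> interior (cball 0 1)"
    by (rule interior_maximal) (rule open_inside[OF assms(2)])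
  then show ?thesis by simp
qed

definition pre :: "(complex \<Rightarrow> real^3) \<Rightarrow> (real^3) set \<Rightarrow> complex set" where
  "pre h L = {z \<in> cball 0 1. h z \<in> L}"

lemma closed_S2: "closed S2" and bounded_S2: "bounded S2"
  by (auto simp: S2_def)

lemma region:
  assumes disk: "oriented_disk h" and L: "is_loop L" "L \<subseteq> h ` cball 0 1"
  shows "\<exists>c. simple_path c \<and> pathfinish c = pathstart c \<and> path_image c = pre h L"
    and "inside (pre h L) \<subseteq> ball 0 1"
    and "h ` pre h L = L"
    and "loop_regions L = {h ` (inside (pre h L) \<union> pre h L), S2 - h ` inside (pre h L)}"
    and "disk_in (h ` cball 0 1) L = h ` (inside (pre h L) \<union> pre h L)"
proof -
  define \<gamma> where "\<gamma> = pre h L"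
  have hc: "continuous_on (cball 0 1) h" "inj_on h (cball 0 1)" "h ` cball 0 1 \<subseteq> S2"
    using disk by (auto simp: oriented_disk_def)
  obtain hi where hom: "homeomorphism (cball 0 1) (h ` cball 0 1) h hi"
    using homeomorphism_compact[OF compact_cball hc(1) refl hc(2)] by auto
  have hi1: "\<And>y. y \<in> h ` cball 0 1 \<Longrightarrow> h (hi y) = y" and hi2: "\<And>z. z \<in> cball 0 1 \<Longrightarrow> hi (h z) = z"
    and hi3: "hi ` (h ` cball 0 1) = cball 0 1" and hi4: "continuous_on (h ` cball 0 1) hi"
    using hom unfolding homeomorphism_def by auto
  obtain f1 f2 where hf: "homeomorphism L (sphere (0::complex) 1) f1 f2"
    using L(1) unfolding is_loop_def homeomorphic_def by auto
  have f2c: "continuous_on (sphere 0 1) f2" and f2i: "f2 ` sphere 0 1 = L"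
    and f2inv: "\<And>y. y \<in> sphere 0 1 \<Longrightarrow> f1 (f2 y) = y"
    using hf unfolding homeomorphism_def by auto
  define c where "c = (hi \<circ> f2) \<circ> circlepath 0 1"
  have contc: "continuous_on (sphere 0 1) (hi \<circ> f2)"
    by (rule continuous_on_compose[OF f2c]) (use f2i L(2) in \<open>auto intro: continuous_on_subset[OF hi4]\<close>)
  have injf2: "inj_on f2 (sphere 0 1)" by (rule inj_on_inverseI[of _ f1]) (use f2inv in auto)
  have injhi: "inj_on hi (f2 ` sphere 0 1)"
    by (rule inj_on_inverseI[of _ h]) (use f2i L(2) hi1 in auto)
  have injc: "inj_on (hi \<circ> f2) (sphere 0 1)" using comp_inj_on[OF injf2 injhi] .
  have pic0: "path_image (circlepath 0 1) = sphere (0::complex) 1" by simp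
  have sc: "simple_path c" unfolding c_def
    by (rule simple_path_continuous_image) (use contc injc in \<open>auto simp: simple_path_circlepath\<close>)
  have cc: "pathfinish c = pathstart c" unfolding c_def
    by (simp add: pathfinish_compose pathstart_compose)
  have hiL: "hi ` L = \<gamma>"
  proof
    show "hi ` L \<subseteq> \<gamma>"
    proof
      fix z assume "z \<in> hi ` L"
      then obtain y where y: "y \<in> L" "z = hi y" by auto
      then have "y \<in> h ` cball 0 1" using L(2) by auto
      then have "hi y \<in> cball 0 1" "h (hi y) = y" using hi1 hi3 by auto
      then show "z \<in> \<gamma>" unfolding \<gamma>_def pre_def using y by simp
    qed
    show "\<gamma> \<subseteq> hi ` L"
    proof
      fix z assume "z \<in> \<gamma>"
      then have z: "z \<in> cball 0 1" "h z \<in> L" unfolding \<gamma>_def pre_def by auto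
      then have "z = hi (h z)" using hi2 by simp
      then show "z \<in> hi ` L" using z(2) by (rule image_eqI)
    qed
  qed
  have pic: "path_image c = \<gamma>" unfolding c_def path_image_compose pic0 image_comp[symmetric] f2i hiL ..
  have gcb: "\<gamma> \<subseteq> cball 0 1" unfolding \<gamma>_def pre_def by auto
  have hg: "h ` \<gamma> = L" unfolding \<gamma>_def pre_def using L(2) by auto
  have clg: "closed \<gamma>" using closed_path_image[OF simple_path_imp_path[OF sc]] pic by simp
  note J = Jordan_inside_outside[OF sc cc, unfolded pic]
  define I where "I = inside \<gamma>"
  have Iball: "I \<subseteq> ball 0 1" unfolding I_def by (rule inside_in_ball[OF gcb clg])
  then have Icb: "I \<subseteq> cball 0 1" by auto
  show "\<exists>c. simple_path c \<and> pathfinish c = pathstart c \<and> path_image c = pre h L"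
    using sc cc pic \<gamma>_def by auto
  show "inside (pre h L) \<subseteq> ball 0 1" using Iball I_def \<gamma>_def by simp
  show "h ` pre h L = L" using hg \<gamma>_def by simp
  obtain q where q: "q \<in> S2" "q \<notin> h ` cball 0 1" using S2_not_disk[OF disk] by blast
  obtain F G where FG: "homeomorphism (S2 - {q}) (UNIV :: complex set) F G"
    using punctured_S2[OF q(1)] by blast
  have GF: "\<And>x. x \<in> S2 - {q} \<Longrightarrow> G (F x) = x" and FG1: "\<And>y. F (G y) = y"
    and GU: "G ` UNIV = S2 - {q}" and Fc: "continuous_on (S2 - {q}) F" and Gc: "continuous_on UNIV G"
    using FG unfolding homeomorphism_def by auto
  have Ginj: "inj G" by (rule inj_on_inverseI[of _ F]) (use FG1 in auto)
  have hq: "h ` cball 0 1 \<subseteq> S2 - {q}" using hc(3) q by auto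
  define \<phi> where "\<phi> = F \<circ> h"
  have contphi: "continuous_on (cball 0 1) \<phi>" unfolding \<phi>_def
    by (rule continuous_on_compose[OF hc(1)]) (rule continuous_on_subset[OF Fc hq])
  have injF: "inj_on F (h ` cball 0 1)" by (rule inj_on_inverseI[of _ G]) (use GF hq in auto)
  have injphi: "inj_on \<phi> (cball 0 1)" unfolding \<phi>_def using comp_inj_on[OF hc(2) injF] .
  define \<Gamma> where "\<Gamma> = F ` L"
  have phig: "\<phi> ` \<gamma> = \<Gamma>" unfolding \<Gamma>_def \<phi>_def image_comp[symmetric] hg ..
  have sphic: "simple_path (\<phi> \<circ> c)"
    by (rule simple_path_continuous_image[OF sc]) (use pic gcb in \<open>auto intro: continuous_on_subset[OF contphi] inj_on_subset[OF injphi]\<close>)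
  have cphic: "pathfinish (\<phi> \<circ> c) = pathstart (\<phi> \<circ> c)" using cc by (simp add: pathfinish_compose pathstart_compose)
  have piphic: "path_image (\<phi> \<circ> c) = \<Gamma>" by (simp add: path_image_compose pic phig)
  note JG = Jordan_inside_outside[OF sphic cphic, unfolded piphic]
  define JI where "JI = inside \<Gamma>"
  define JO where "JO = outside \<Gamma>"
  define S where "S = \<phi> ` I"
  have oS: "open S" unfolding S_def
    by (rule invariance_of_domain) (use J Icb in \<open>auto simp: I_def intro: continuous_on_subset[OF contphi] inj_on_subset[OF injphi]\<close>)
  have cS: "connected S" unfolding S_def
    by (rule connected_continuous_image) (use J Icb in \<open>auto simp: I_def intro: continuous_on_subset[OF contphi]\<close>)
  have neS: "S \<noteq> {}" unfolding S_def I_def using J by auto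
  have bS: "bounded S"
  proof -
    have "compact (\<phi> ` cball 0 1)" by (rule compact_continuous_image[OF contphi compact_cball])
    then show ?thesis unfolding S_def using Icb by (meson bounded_subset compact_imp_bounded image_mono)
  qed
  have Ig: "I \<inter> \<gamma> = {}" unfolding I_def by (rule inside_no_overlap)
  have clI: "closure I = I \<union> \<gamma>" unfolding I_def using J by (simp add: closure_Un_frontier)
  have Igcb: "I \<union> \<gamma> \<subseteq> cball 0 1" using Icb gcb by auto
  have SG: "S \<inter> \<Gamma> = {}"
  proof -
    have "\<phi> ` I \<inter> \<phi> ` \<gamma> = \<phi> ` (I \<inter> \<gamma>)"
      by (rule inj_on_image_Int[OF injphi Icb gcb, symmetric])
    then show ?thesis using Ig phig S_def by simp
  qed
  have clS: "closure S \<subseteq> S \<union> \<Gamma>"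
  proof -
    have "compact (closure I)" using J unfolding I_def by (simp add: compact_closure)
    then have "compact (I \<union> \<gamma>)" unfolding clI .
    then have "compact (\<phi> ` (I \<union> \<gamma>))"
      by (rule compact_continuous_image[OF continuous_on_subset[OF contphi Igcb]])
    then have "closed (\<phi> ` (I \<union> \<gamma>))" by (rule compact_imp_closed)
    moreover have "S \<subseteq> \<phi> ` (I \<union> \<gamma>)" unfolding S_def by auto
    ultimately have "closure S \<subseteq> \<phi> ` (I \<union> \<gamma>)" by (rule closure_minimal[rotated])
    then show ?thesis unfolding S_def image_Un phig by simp
  qed
  have JIO: "JI \<inter> JO = {}" "JI \<union> JO = - \<Gamma>" "connected JI" "connected JO" "\<not> bounded JO" "open JI" "open JO"
    "bounded JI" "frontier JI = \<Gamma>" "frontier JO = \<Gamma>" "JI \<noteq> {}" "JO \<noteq> {}"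
    using JG unfolding JI_def JO_def by auto
  have SO: "JO \<inter> S = {}"
  proof (rule ccontr)
    assume ne: "JO \<inter> S \<noteq> {}"
    have o: "openin (top_of_set JO) (JO \<inter> S)" using oS by (rule openin_open_Int)
    have "JO \<inter> \<Gamma> = {}" using JIO(2) by auto
    then have e: "JO \<inter> S = JO \<inter> closure S" using clS closure_subset[of S] by auto
    have cl: "closedin (top_of_set JO) (JO \<inter> S)" unfolding e by (rule closedin_closed_Int) simp
    have "JO \<inter> S = {} \<or> JO \<inter> S = JO" using JIO(4) o cl unfolding connected_clopen by blast
    then have "JO \<subseteq> S" using ne by auto
    then show False using bS JIO(5) bounded_subset by blast
  qed
  have SI: "S \<subseteq> JI" using SO SG JIO(2) by auto
  have eqS: "S = JI"
  proof -
    have o: "openin (top_of_set JI) (JI \<inter> S)" using oS by (rule openin_open_Int)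
    have "JI \<inter> \<Gamma> = {}" using JIO(2) by auto
    then have e: "JI \<inter> S = JI \<inter> closure S" using clS closure_subset[of S] by auto
    have cl: "closedin (top_of_set JI) (JI \<inter> S)" unfolding e by (rule closedin_closed_Int) simp
    have "JI \<inter> S = {} \<or> JI \<inter> S = JI" using JIO(3) o cl unfolding connected_clopen by blast
    then show ?thesis using SI neS by auto
  qed
  have hIS: "h ` I = G ` JI"
  proof -
    have "G ` JI = G ` (\<phi> ` I)" using eqS unfolding S_def by simp
    also have "\<dots> = (\<lambda>z. G (F (h z))) ` I" unfolding \<phi>_def image_image comp_def ..
    also have "\<dots> = (\<lambda>z. z) ` (h ` I)" unfolding image_image
    proof (rule image_cong[OF refl])
      fix z assume "z \<in> I"
      then have "h z \<in> S2 - {q}" using hq Icb by blast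
      then show "G (F (h z)) = h z" by (rule GF)
    qed
    also have "\<dots> = h ` I" by simp
    finally show ?thesis by simp
  qed
  have GG: "G ` \<Gamma> = L"
  proof -
    have "G ` \<Gamma> = (\<lambda>z. G (F z)) ` L" unfolding \<Gamma>_def image_image ..
    also have "\<dots> = (\<lambda>z. z) ` L"
    proof (rule image_cong[OF refl])
      fix z assume "z \<in> L"
      then have "z \<in> S2 - {q}" using hq L(2) by blast
      then show "G (F z) = z" by (rule GF)
    qed
    finally show ?thesis by simp
  qed
  define P where "P = G ` JI"
  define Q where "Q = G ` JO \<union> {q}"
  have qL: "q \<notin> L" using q L(2) by auto
  have GSq: "\<And>A. G ` A \<subseteq> S2 - {q}" using GU by auto
  have dec: "S2 - L = P \<union> Q"
  proof -
    have "G ` (- \<Gamma>) = G ` UNIV - G ` \<Gamma>" by (rule image_set_diff[OF Ginj, of UNIV \<Gamma>, unfolded Compl_eq_Diff_UNIV[symmetric]])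
    then have "G ` (- \<Gamma>) = S2 - {q} - L" unfolding GU GG .
    then have "S2 - {q} - L = P \<union> G ` JO" unfolding P_def JIO(2)[symmetric] image_Un by simp
    then show ?thesis unfolding Q_def using q(1) qL by blast
  qed
  have PQ: "P \<inter> Q = {}"
  proof -
    have "G ` JI \<inter> G ` JO = G ` (JI \<inter> JO)" by (rule image_Int[OF Ginj, symmetric])
    then have "G ` JI \<inter> G ` JO = {}" using JIO(1) by simp
    moreover have "q \<notin> G ` JI" using GSq[of JI] by blast
    ultimately show ?thesis unfolding P_def Q_def by blast
  qed
  have neP: "P \<noteq> {}" unfolding P_def using JIO(11) by blast
  have cP: "connected P" unfolding P_def
    by (rule connected_continuous_image[OF continuous_on_subset[OF Gc] JIO(3)]) simp
  have qcl: "q \<in> closure (G ` JO)"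
  proof (rule ccontr)
    assume nq: "q \<notin> closure (G ` JO)"
    have GJO: "G ` JO \<subseteq> S2" using GSq[of JO] by blast
    have "closure (G ` JO) \<subseteq> S2" by (rule closure_minimal[OF GJO closed_S2])
    then have K: "closure (G ` JO) \<subseteq> S2 - {q}" using nq by blast
    have "G ` JO \<subseteq> S2" using GSq[of JO] by blast
    then have "compact (closure (G ` JO))" unfolding compact_closure by (rule bounded_subset[OF bounded_S2])
    then have "compact (F ` closure (G ` JO))"
      by (rule compact_continuous_image[OF continuous_on_subset[OF Fc K]])
    then have bF: "bounded (F ` closure (G ` JO))" by (rule compact_imp_bounded)
    have sF: "JO \<subseteq> F ` closure (G ` JO)"
    proof
      fix z assume z: "z \<in> JO"
      have "G z \<in> G ` JO" using z by (rule imageI)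
      then have "G z \<in> closure (G ` JO)" using closure_subset[of "G ` JO"] by (rule subsetD[rotated])
      then show "z \<in> F ` closure (G ` JO)" by (rule image_eqI[where f=F and x="G z", OF FG1[of z, symmetric]])
    qed
    have "bounded JO" by (rule bounded_subset[OF bF sF])
    then show False using JIO(5) by blast
  qed
  have cQ: "connected Q"
  proof (rule connected_intermediate_closure)
    show "connected (G ` JO)"
      by (rule connected_continuous_image[OF continuous_on_subset[OF Gc] JIO(4)]) simp
    show "G ` JO \<subseteq> Q" unfolding Q_def by blast
    show "Q \<subseteq> closure (G ` JO)" unfolding Q_def using qcl closure_subset[of "G ` JO"] by blast
  qed
  have neQ: "Q \<noteq> {}" unfolding Q_def by blast
  have S2q: "openin (top_of_set S2) (S2 - {q})"
    by (rule openin_delete[OF openin_subtopology_self])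
  have oP: "openin (top_of_set S2) P"
  proof -
    have o: "openin (top_of_set (S2 - {q})) ((S2 - {q}) \<inter> F -` JI)"
    proof (rule continuous_openin_preimage[OF Fc, of UNIV JI])
      show "F \<in> S2 - {q} \<rightarrow> UNIV" by simp
      show "openin (top_of_set UNIV) JI" unfolding subtopology_UNIV open_openin[symmetric] by (rule JIO(6))
    qed
    have e: "(S2 - {q}) \<inter> F -` JI = P"
    proof
      show "(S2 - {q}) \<inter> F -` JI \<subseteq> P"
      proof
        fix x assume x: "x \<in> (S2 - {q}) \<inter> F -` JI"
        then have "x = G (F x)" using GF[of x] by simp
        moreover have "F x \<in> JI" using x by simp
        ultimately show "x \<in> P" unfolding P_def by (rule image_eqI)
      qed
      show "P \<subseteq> (S2 - {q}) \<inter> F -` JI"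
      proof
        fix x assume "x \<in> P"
        then obtain z where z: "z \<in> JI" "x = G z" unfolding P_def by blast
        have "x \<in> S2 - {q}" using GSq[of JI] z by blast
        moreover have "F x \<in> JI" using z FG1[of z] by simp
        ultimately show "x \<in> (S2 - {q}) \<inter> F -` JI" by simp
      qed
    qed
    show ?thesis using openin_trans[OF o[unfolded e] S2q] .
  qed
  have PsL: "P \<subseteq> S2 - L" using dec by blast
  have oP': "openin (top_of_set (S2 - L)) P"
    by (rule openin_subset_trans[OF oP PsL]) blast
  have cJI: "closure JI = JI \<union> \<Gamma>" using JIO(9) by (simp add: closure_Un_frontier)
  have compJ: "compact (G ` (JI \<union> \<Gamma>))"
  proof -
    have "compact (closure JI)" using JIO(8) by (simp add: compact_closure)
    then show ?thesis unfolding cJI by (rule compact_continuous_image[OF continuous_on_subset[OF Gc subset_UNIV]])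
  qed
  have clP: "closure P = G ` (JI \<union> \<Gamma>)"
  proof
    show "closure P \<subseteq> G ` (JI \<union> \<Gamma>)"
      by (rule closure_minimal) (use compJ compact_imp_closed in \<open>auto simp: P_def\<close>)
    have "G ` closure JI \<subseteq> closure P"
    proof (rule image_closure_subset)
      show "continuous_on (closure JI) G" by (rule continuous_on_subset[OF Gc]) simp
      show "closed (closure P)" by simp
      show "G ` JI \<subseteq> closure P" unfolding P_def by (rule closure_subset)
    qed
    then show "G ` (JI \<union> \<Gamma>) \<subseteq> closure P" unfolding cJI .
  qed
  have PL: "G ` (JI \<union> \<Gamma>) = P \<union> L" unfolding image_Un P_def GG ..
  have oQ': "openin (top_of_set (S2 - L)) Q"
  proof -
    have "Q = (S2 - L) \<inter> - G ` (JI \<union> \<Gamma>)" unfolding PL using dec PQ by blast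
    moreover have "open (- G ` (JI \<union> \<Gamma>))" using compJ compact_imp_closed by blast
    ultimately show ?thesis by (metis openin_open_Int)
  qed
  have comps: "components (S2 - L) = {P, Q}" by (rule comp2[OF dec PQ neP neQ cP cQ oP' oQ'])
  have clQ: "closure Q = S2 - P"
  proof
    have "closedin (top_of_set S2) (S2 - P)" using oP by (simp add: openin_closedin_eq)
    then have "closed (S2 - P)" using closed_S2 closedin_closed_trans by blast
    moreover have "Q \<subseteq> S2 - P" using dec PQ by blast
    ultimately show "closure Q \<subseteq> S2 - P" by (rule closure_minimal[rotated])
    have "\<Gamma> \<subseteq> closure JO" using JIO(10) by (metis closure_Un_frontier sup.cobounded2)
    then have "G ` \<Gamma> \<subseteq> G ` closure JO" by (rule image_mono)
    also have "\<dots> \<subseteq> closure (G ` JO)"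
    proof (rule image_closure_subset)
      show "continuous_on (closure JO) G" by (rule continuous_on_subset[OF Gc]) simp
      show "closed (closure (G ` JO))" by simp
      show "G ` JO \<subseteq> closure (G ` JO)" by (rule closure_subset)
    qed
    also have "\<dots> \<subseteq> closure Q" by (rule closure_mono) (auto simp: Q_def)
    finally have "L \<subseteq> closure Q" unfolding GG .
    then show "S2 - P \<subseteq> closure Q" using dec closure_subset[of Q] by blast
  qed
  have PhI: "P = h ` I" unfolding P_def hIS ..
  have clP': "closure P = h ` (I \<union> \<gamma>)"
  proof -
    have "closure P = P \<union> L" using clP PL by simp
    then show ?thesis using PhI hg by (simp add: image_Un)
  qed
  have regs: "loop_regions L = {h ` (I \<union> \<gamma>), S2 - h ` I}"
    unfolding loop_regions_def comps using clP' clQ PhI by auto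
  show "loop_regions L = {h ` (inside (pre h L) \<union> pre h L), S2 - h ` inside (pre h L)}"
    using regs unfolding I_def \<gamma>_def .
  have "disk_in (h ` cball 0 1) L = h ` (I \<union> \<gamma>)"
    unfolding disk_in_def
  proof (rule the_equality)
    show "h ` (I \<union> \<gamma>) \<in> loop_regions L \<and> h ` (I \<union> \<gamma>) \<subseteq> h ` cball 0 1"
      using regs Igcb by auto
    fix D assume D: "D \<in> loop_regions L \<and> D \<subseteq> h ` cball 0 1"
    have "q \<in> S2 - h ` I" using q Icb by auto
    then have "D \<noteq> S2 - h ` I" using D q(2) by auto
    then show "D = h ` (I \<union> \<gamma>)" using D regs by auto
  qed
  then show "disk_in (h ` cball 0 1) L = h ` (inside (pre h L) \<union> pre h L)" unfolding I_def \<gamma>_def .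
qed

lemma cwp_shift:
  assumes g: "cwp \<gamma> g" and a: "a \<in> {0..1}"
  shows "cwp \<gamma> (shiftpath a g)"
proof -
  have sg: "simple_path g" and cg: "pathfinish g = pathstart g" and ig: "path_image g = \<gamma>"
    and wg: "\<forall>w\<in>inside \<gamma>. winding_number g w = -1" using g by (auto simp: cwp_def)
  have "winding_number (shiftpath a g) w = -1" if w: "w \<in> inside \<gamma>" for w
  proof -
    have "w \<notin> path_image g" using w ig inside_no_overlap by blast
    then have "winding_number (shiftpath a g) w = winding_number g w"
      by (rule winding_number_shiftpath[OF simple_path_imp_path[OF sg] _ cg a])
    then show ?thesis using wg w by simp
  qed
  moreover have "simple_path (shiftpath a g)" using simple_path_shiftpath[OF sg cg] a by auto
  moreover have "pathfinish (shiftpath a g) = pathstart (shiftpath a g)" using closed_shiftpath[OF cg a] .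
  moreover have "path_image (shiftpath a g) = \<gamma>" using path_image_shiftpath[OF a cg] ig by simp
  ultimately show ?thesis unfolding cwp_def by blast
qed

lemma cwp_exists:
  assumes sc: "simple_path c" and cc: "pathfinish c = pathstart c"
  shows "\<exists>g. cwp (path_image c) g"
proof -
  have pc: "path c" using sc by (rule simple_path_imp_path)
  show ?thesis
  proof (cases rule: simple_closed_path_winding_number_inside[OF sc])
    case 1
    have "cwp (path_image c) (reversepath c)"
      unfolding cwp_def
    proof (intro conjI ballI)
      show "simple_path (reversepath c)" using sc by (rule simple_path_reversepath)
      show "pathfinish (reversepath c) = pathstart (reversepath c)" using cc by simp
      show "path_image (reversepath c) = path_image c" by simp
      fix w assume w: "w \<in> inside (path_image c)"
      have "w \<notin> path_image c" using w inside_no_overlap by blast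
      then have "winding_number (reversepath c) w = - winding_number c w"
        by (rule winding_number_reversepath[OF pc])
      then show "winding_number (reversepath c) w = -1" using 1 w by simp
    qed
    then show ?thesis by blast
  next
    case 2
    then have "cwp (path_image c) c" unfolding cwp_def using sc cc by blast
    then show ?thesis by blast
  qed
qed

lemma cwp_param:
  assumes g: "cwp \<gamma> g" and z: "z \<in> \<gamma>"
  shows "\<exists>u. 0 \<le> u \<and> u < 1 \<and> g u = z"
proof -
  have cg: "g 1 = g 0" using g by (simp add: cwp_def pathfinish_def pathstart_def)
  obtain u where u: "u \<in> {0..1}" "g u = z" using g z by (auto simp: cwp_def path_image_def)
  show ?thesis
  proof (cases "u = 1")
    case True then show ?thesis using u cg by (intro exI[of _ 0]) auto
  next
    case False then show ?thesis using u by (intro exI[of _ u]) auto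
  qed
qed

lemma cwp_at:
  assumes g: "cwp \<gamma> g" and z: "z \<in> \<gamma>"
  shows "\<exists>g'. cwp \<gamma> g' \<and> g' 0 = z"
proof -
  obtain u where u: "0 \<le> u" "u < 1" "g u = z" using cwp_param[OF g z] by blast
  have "cwp \<gamma> (shiftpath u g)" by (rule cwp_shift[OF g]) (use u in auto)
  moreover have "shiftpath u g 0 = z" using u by (simp add: shiftpath_def)
  ultimately show ?thesis by blast
qed

lemma shift_img:
  assumes "0 \<le> a" "a \<le> b" "b \<le> 1"
  shows "shiftpath a g ` {0..b-a} = g ` {a..b}" "shiftpath a g ` {0<..<b-a} = g ` {a<..<b}"
    "shiftpath a g (b - a) = g b"
proof -
  have e: "shiftpath a g x = g (a + x)" if "x \<le> b - a" for x using that assms by (simp add: shiftpath_def)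
  show "shiftpath a g ` {0..b-a} = g ` {a..b}"
  proof
    show "shiftpath a g ` {0..b-a} \<subseteq> g ` {a..b}" using e by auto
    show "g ` {a..b} \<subseteq> shiftpath a g ` {0..b-a}"
    proof
      fix y assume "y \<in> g ` {a..b}"
      then obtain x where x: "x \<in> {a..b}" "y = g x" by blast
      then have "y = shiftpath a g (x - a)" using e[of "x - a"] by simp
      moreover have "x - a \<in> {0..b-a}" using x by auto
      ultimately show "y \<in> shiftpath a g ` {0..b-a}" by (rule image_eqI)
    qed
  qed
  show "shiftpath a g ` {0<..<b-a} = g ` {a<..<b}"
  proof
    show "shiftpath a g ` {0<..<b-a} \<subseteq> g ` {a<..<b}" using e by auto
    show "g ` {a<..<b} \<subseteq> shiftpath a g ` {0<..<b-a}"
    proof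
      fix y assume "y \<in> g ` {a<..<b}"
      then obtain x where x: "x \<in> {a<..<b}" "y = g x" by blast
      then have "y = shiftpath a g (x - a)" using e[of "x - a"] by simp
      moreover have "x - a \<in> {0<..<b-a}" using x by auto
      ultimately show "y \<in> shiftpath a g ` {0<..<b-a}" by (rule image_eqI)
    qed
  qed
  show "shiftpath a g (b - a) = g b" using e[of "b - a"] by simp
qed

lemma cwp_open_closed:
  assumes g: "cwp \<gamma> g" and t: "0 < t" "t < 1"
  shows "g ` {0<..<t} = g ` {0..t} - {g 0, g t}"
proof -
  have sg: "simple_path g" using g by (simp add: cwp_def)
  show ?thesis
  proof
    show "g ` {0<..<t} \<subseteq> g ` {0..t} - {g 0, g t}"
    proof
      fix y assume "y \<in> g ` {0<..<t}"
      then obtain s where s: "s \<in> {0<..<t}" "y = g s" by blast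
      have "g s \<noteq> g 0" by (rule sp_neq[OF sg]) (use s t in auto)
      moreover have "g s \<noteq> g t" by (rule sp_neq[OF sg]) (use s t in auto)
      ultimately show "y \<in> g ` {0..t} - {g 0, g t}" using s by auto
    qed
    show "g ` {0..t} - {g 0, g t} \<subseteq> g ` {0<..<t}"
    proof
      fix y assume y: "y \<in> g ` {0..t} - {g 0, g t}"
      then obtain s where s: "s \<in> {0..t}" "y = g s" by blast
      then have "s \<noteq> 0" "s \<noteq> t" using y by auto
      then show "y \<in> g ` {0<..<t}" using s by auto
    qed
  qed
qed

lemma cw_param_iff:
  assumes disk: "oriented_disk h" and L: "is_loop L" "L \<subseteq> h ` cball 0 1"
  shows "cw_param h L g \<longleftrightarrow> cwp (pre h L) g"
proof -
  note R = region[OF disk L]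
  have inj: "inj_on h (cball 0 1)" using disk by (simp add: oriented_disk_def)
  have pcb: "pre h L \<subseteq> cball 0 1" by (auto simp: pre_def)
  have icb: "inside (pre h L) \<subseteq> cball 0 1" using R(2) by auto
  have dI: "inside (pre h L) \<inter> pre h L = {}" by (rule inside_no_overlap)
  have key: "(w \<in> cball 0 1 \<and> h w \<in> disk_in (h ` cball 0 1) L - L) \<longleftrightarrow> w \<in> inside (pre h L)" for w
  proof
    assume w: "w \<in> cball 0 1 \<and> h w \<in> disk_in (h ` cball 0 1) L - L"
    then obtain w' where w': "w' \<in> inside (pre h L) \<union> pre h L" "h w = h w'" unfolding R(5) by blast
    have "w' \<in> cball 0 1" using w' icb pcb by blast
    then have "w = w'" using inj w w'(2) by (meson inj_onD)
    moreover have "w \<notin> pre h L" using w by (simp add: pre_def)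
    ultimately show "w \<in> inside (pre h L)" using w' by blast
  next
    assume w: "w \<in> inside (pre h L)"
    have wc: "w \<in> cball 0 1" using w icb by blast
    have "h w \<in> disk_in (h ` cball 0 1) L" unfolding R(5) using w by blast
    moreover have "h w \<notin> L"
    proof
      assume "h w \<in> L"
      then have "w \<in> pre h L" using wc by (simp add: pre_def)
      then show False using w dI by blast
    qed
    ultimately show "w \<in> cball 0 1 \<and> h w \<in> disk_in (h ` cball 0 1) L - L" using wc by blast
  qed
  have pim: "(path_image g \<subseteq> cball 0 1 \<and> h ` path_image g = L) \<longleftrightarrow> path_image g = pre h L"
  proof
    assume a: "path_image g \<subseteq> cball 0 1 \<and> h ` path_image g = L"
    show "path_image g = pre h L"
    proof
      show "path_image g \<subseteq> pre h L" using a by (auto simp: pre_def)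
      show "pre h L \<subseteq> path_image g"
      proof
        fix z assume z: "z \<in> pre h L"
        then have "h z \<in> h ` path_image g" using a by (simp add: pre_def)
        then obtain z' where z': "z' \<in> path_image g" "h z = h z'" by blast
        have "z = z'" using inj z z' a pcb by (meson inj_onD subsetD)
        then show "z \<in> path_image g" using z' by simp
      qed
    qed
  next
    assume "path_image g = pre h L"
    then show "path_image g \<subseteq> cball 0 1 \<and> h ` path_image g = L" using R(3) pcb by simp
  qed
  show ?thesis unfolding cw_param_def cwp_def using key pim by blast
qed

lemma seg_eq:
  assumes disk: "oriented_disk h" and L: "is_loop L" "L \<subseteq> h ` cball 0 1"
    and g: "cwp (pre h L) g" and t: "0 < t" "t < 1"
  shows "cw_closed_seg h L (h (g 0)) (h (g t)) = h ` g ` {0..t}"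
    and "cw_open_seg h L (h (g 0)) (h (g t)) = h ` g ` {0<..<t}"
proof -
  have inj: "inj_on h (cball 0 1)" using disk by (simp add: oriented_disk_def)
  have pcb: "pre h L \<subseteq> cball 0 1" by (auto simp: pre_def)
  have ig: "path_image g = pre h L" using g by (simp add: cwp_def)
  have gin: "\<And>u. u \<in> {0..1} \<Longrightarrow> g u \<in> cball 0 1" using ig pcb unfolding path_image_def by blast
  have cpg: "cw_param h L g" using cw_param_iff[OF disk L] g by simp
  have main: "g' ` {0..t'} = g ` {0..t}" "g' 0 = g 0" "g' t' = g t"
    if g': "cw_param h L g'" "h (pathstart g') = h (g 0)" "0 < t'" "t' < 1" "h (g' t') = h (g t)" for g' t'
  proof -
    have cg': "cwp (pre h L) g'" using cw_param_iff[OF disk L] g' by simp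
    have ig': "path_image g' = pre h L" using cg' by (simp add: cwp_def)
    have gin': "\<And>u. u \<in> {0..1} \<Longrightarrow> g' u \<in> cball 0 1" using ig' pcb unfolding path_image_def by blast
    show e0: "g' 0 = g 0"
      using inj_onD[OF inj, of "g' 0" "g 0"] g'(2) gin gin' by (simp add: pathstart_def)
    show et: "g' t' = g t"
      using inj_onD[OF inj, of "g' t'" "g t"] g'(3,4,5) t gin gin' by simp
    show "g' ` {0..t'} = g ` {0..t}" by (rule seg_unique[OF g cg' e0 t g'(3,4) et])
  qed
  show "cw_closed_seg h L (h (g 0)) (h (g t)) = h ` g ` {0..t}"
  proof
    show "cw_closed_seg h L (h (g 0)) (h (g t)) \<subseteq> h ` g ` {0..t}"
    proof
      fix p assume "p \<in> cw_closed_seg h L (h (g 0)) (h (g t))"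
      then obtain g' t' s where g': "cw_param h L g'" "h (pathstart g') = h (g 0)" "0 < t'" "t' < 1"
        "h (g' t') = h (g t)" "0 \<le> s" "s \<le> t'" "p = h (g' s)"
        unfolding cw_closed_seg_def by blast
      have "g' s \<in> g' ` {0..t'}" using g' by auto
      then have "g' s \<in> g ` {0..t}" using main[OF g'(1-5)] by simp
      then show "p \<in> h ` g ` {0..t}" using g'(8) by blast
    qed
    show "h ` g ` {0..t} \<subseteq> cw_closed_seg h L (h (g 0)) (h (g t))"
    proof
      fix p assume "p \<in> h ` g ` {0..t}"
      then obtain s where s: "s \<in> {0..t}" "p = h (g s)" by blast
      show "p \<in> cw_closed_seg h L (h (g 0)) (h (g t))"
        unfolding cw_closed_seg_def using cpg t s by (auto simp: pathstart_def)
    qed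
  qed
  show "cw_open_seg h L (h (g 0)) (h (g t)) = h ` g ` {0<..<t}"
  proof
    show "cw_open_seg h L (h (g 0)) (h (g t)) \<subseteq> h ` g ` {0<..<t}"
    proof
      fix p assume "p \<in> cw_open_seg h L (h (g 0)) (h (g t))"
      then obtain g' t' s where g': "cw_param h L g'" "h (pathstart g') = h (g 0)" "0 < t'" "t' < 1"
        "h (g' t') = h (g t)" "0 < s" "s < t'" "p = h (g' s)"
        unfolding cw_open_seg_def by blast
      have cg': "cwp (pre h L) g'" using cw_param_iff[OF disk L] g' by simp
      note m = main[OF g'(1-5)]
      have "g' s \<in> g' ` {0<..<t'}" using g' by auto
      then have "g' s \<in> g' ` {0..t'} - {g' 0, g' t'}" using cwp_open_closed[OF cg' g'(3,4)] by simp
      then have "g' s \<in> g ` {0..t} - {g 0, g t}" using m by simp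
      then have "g' s \<in> g ` {0<..<t}" using cwp_open_closed[OF g t] by simp
      then show "p \<in> h ` g ` {0<..<t}" using g'(8) by blast
    qed
    show "h ` g ` {0<..<t} \<subseteq> cw_open_seg h L (h (g 0)) (h (g t))"
    proof
      fix p assume "p \<in> h ` g ` {0<..<t}"
      then obtain s where s: "s \<in> {0<..<t}" "p = h (g s)" by blast
      have "cw_param h L g \<and> h (pathstart g) = h (g 0) \<and> 0 < t \<and> t < 1 \<and> h (g t) = h (g t) \<and> 0 < s \<and> s < t \<and> p = h (g s)"
        using cpg t s by (simp add: pathstart_def)
      then show "p \<in> cw_open_seg h L (h (g 0)) (h (g t))"
        unfolding cw_open_seg_def by blast
    qed
  qed
qed

lemma loop_from_path:
  assumes disk: "oriented_disk h" and sz: "simple_path z" "pathfinish z = pathstart z"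
    and zc: "path_image z \<subseteq> cball 0 1"
  shows "is_loop (h ` path_image z)" "pre h (h ` path_image z) = path_image z"
proof -
  have hc: "continuous_on (cball 0 1) h" "inj_on h (cball 0 1)" "h ` cball 0 1 \<subseteq> S2"
    using disk by (auto simp: oriented_disk_def)
  have "path_image z homeomorphic sphere (0::complex) 1"
    by (rule homeomorphic_simple_path_image_circle[OF sz]) simp
  moreover have "path_image z homeomorphic h ` path_image z"
  proof -
    have "compact (path_image z)" using sz by (simp add: compact_simple_path_image)
    then obtain k where "homeomorphism (path_image z) (h ` path_image z) h k"
      using homeomorphism_compact[of "path_image z" h] continuous_on_subset[OF hc(1) zc]
        inj_on_subset[OF hc(2) zc] by blast
    then show ?thesis unfolding homeomorphic_def by blast
  qed
  ultimately have "h ` path_image z homeomorphic sphere (0::complex) 1"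
    using homeomorphic_sym homeomorphic_trans by blast
  moreover have "h ` path_image z \<subseteq> S2" using hc(3) zc by blast
  ultimately show "is_loop (h ` path_image z)" unfolding is_loop_def by blast
  show "pre h (h ` path_image z) = path_image z"
  proof
    show "pre h (h ` path_image z) \<subseteq> path_image z"
    proof
      fix w assume "w \<in> pre h (h ` path_image z)"
      then have w: "w \<in> cball 0 1" "h w \<in> h ` path_image z" by (auto simp: pre_def)
      then obtain w' where "w' \<in> path_image z" "h w = h w'" by blast
      then show "w \<in> path_image z" using inj_onD[OF hc(2)] w zc by (metis subsetD)
    qed
    show "path_image z \<subseteq> pre h (h ` path_image z)" using zc by (auto simp: pre_def)
  qed
qed

lemma wind_eq_on:
  assumes p: "path p" and w: "w \<notin> path_image p" and e: "\<And>x. x \<in> {0..1} \<Longrightarrow> p x = q x"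
  shows "winding_number p w = winding_number q w"
proof -
  have "homotopic_paths (- {w}) p q"
    by (rule homotopic_paths_eq[OF p]) (use w e in auto)
  then show ?thesis by (rule winding_number_homotopic_paths)
qed

lemma wind_sub_diff:
  assumes pg: "path g" and w: "w \<notin> path_image g" and "a \<in> {0..1}" "b \<in> {0..1}"
  shows "winding_number (subpath a b g) w = winding_number (subpath 0 b g) w - winding_number (subpath 0 a g) w"
proof -
  have "winding_number (subpath 0 a g) w + winding_number (subpath a b g) w = winding_number (subpath 0 b g) w"
    using winding_number_subpath_combine[OF pg w, of 0 a b] assms by simp
  then show ?thesis by (metis add_diff_cancel_left')
qed

lemma wind_shiftsub:
  assumes pg: "path g" and cg: "pathfinish g = pathstart g" and w: "w \<notin> path_image g"
    and u: "0 \<le> u" "u < 1" and v: "0 \<le> v" "v < 1" and uv: "u \<noteq> v"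
    and d: "d = (if u < v then v - u else 1 + v - u)"
  shows "winding_number (subpath 0 d (shiftpath u g)) w =
         winding_number (subpath 0 v g) w - winding_number (subpath 0 u g) w + (if u < v then 0 else winding_number g w)"
proof -
  define f where "f = shiftpath u g"
  have pf: "path f" unfolding f_def by (rule path_shiftpath[OF pg cg]) (use u in auto)
  have if_: "path_image f = path_image g" unfolding f_def by (rule path_image_shiftpath) (use u cg in auto)
  have wf: "w \<notin> path_image f" using w if_ by simp
  have g10: "g 1 = g 0" using cg by (simp add: pathfinish_def pathstart_def)
  show ?thesis
  proof (cases "u < v")
    case True
    then have dd: "d = v - u" using d by simp
    have "winding_number (subpath 0 d f) w = winding_number (subpath u v g) w"
    proof (rule wind_eq_on)
      show "path (subpath 0 d f)" by (rule path_subpath[OF pf]) (use dd True u v in auto)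
      show "w \<notin> path_image (subpath 0 d f)"
        using wf path_image_subpath_subset[of 0 d f] dd True u v by auto
      fix x :: real assume x: "x \<in> {0..1}"
      have "(v - u) * x \<le> v - u" using x True by (simp add: mult_left_le)
      then have "u + (v - u) * x \<le> 1" using v by linarith
      then show "subpath 0 d f x = subpath u v g x"
        unfolding subpath_def f_def shiftpath_def dd by (simp add: algebra_simps)
    qed
    also have "\<dots> = winding_number (subpath 0 v g) w - winding_number (subpath 0 u g) w"
      by (rule wind_sub_diff[OF pg w]) (use u v in auto)
    finally show ?thesis using True unfolding f_def by simp
  next
    case False
    then have vu: "v < u" using uv by auto
    then have dd: "d = 1 + v - u" using d by simp
    define c where "c = 1 - u"
    have c: "0 < c" "c \<le> d" "d < 1" using u v vu unfolding c_def dd by auto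
    have comb: "winding_number (subpath 0 c f) w + winding_number (subpath c d f) w = winding_number (subpath 0 d f) w"
      by (rule winding_number_subpath_combine[OF pf wf]) (use c in auto)
    have e1: "winding_number (subpath 0 c f) w = winding_number (subpath u 1 g) w"
    proof (rule wind_eq_on)
      show "path (subpath 0 c f)" by (rule path_subpath[OF pf]) (use c in auto)
      show "w \<notin> path_image (subpath 0 c f)"
        using wf path_image_subpath_subset[of 0 c f] c by auto
      fix x :: real assume x: "x \<in> {0..1}"
      have "(1 - u) * x \<le> 1 - u" using x u by (simp add: mult_left_le)
      then have "u + (1 - u) * x \<le> 1" by linarith
      then show "subpath 0 c f x = subpath u 1 g x"
        unfolding subpath_def f_def shiftpath_def c_def by (simp add: algebra_simps)
    qed
    have e2: "winding_number (subpath c d f) w = winding_number (subpath 0 v g) w"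
    proof (rule wind_eq_on)
      show "path (subpath c d f)" by (rule path_subpath[OF pf]) (use c in auto)
      show "w \<notin> path_image (subpath c d f)"
        using wf path_image_subpath_subset[of c d f] c by auto
      fix x :: real assume x: "x \<in> {0..1}"
      have arg: "(d - c) * x + c = 1 - u + v * x" unfolding dd c_def by (simp add: algebra_simps)
      have "0 \<le> v * x" using v x by simp
      show "subpath c d f x = subpath 0 v g x"
      proof (cases "v * x = 0")
        case True
        have "subpath c d f x = g 1" unfolding subpath_def f_def shiftpath_def arg True by simp
        moreover have "subpath 0 v g x = g 0" unfolding subpath_def diff_zero add_0_right True by simp
        ultimately show ?thesis using g10 by simp
      next
        case False
        then have "0 < v * x" using \<open>0 \<le> v * x\<close> by (simp only: less_le) simp
        then show ?thesis unfolding subpath_def f_def shiftpath_def arg by (simp add: algebra_simps)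
      qed
    qed
    have "winding_number (subpath u 1 g) w = winding_number (subpath 0 1 g) w - winding_number (subpath 0 u g) w"
      by (rule wind_sub_diff[OF pg w]) (use u in auto)
    then have "winding_number (subpath 0 d f) w = winding_number g w - winding_number (subpath 0 u g) w + winding_number (subpath 0 v g) w"
      using comb e1 e2 by simp
    then show ?thesis using vu unfolding f_def by (simp add: algebra_simps)
  qed
qed

lemma local_side:
  fixes a g :: "real \<Rightarrow> complex"
  assumes g: "cwp \<gamma> g" and d: "0 < d" "d < 1"
    and pa: "path a" and a0: "pathstart a = g d" and a1: "pathfinish a = g 0"
    and Ag: "path_image a \<inter> \<gamma> \<subseteq> {g 0, g d}" and Ai: "path_image a \<inter> inside \<gamma> = {}"
    and sz: "simple_path (a +++ subpath 0 d g)"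
    and wz: "\<forall>w\<in>inside (path_image (a +++ subpath 0 d g)). winding_number (a +++ subpath 0 d g) w = -1"
  shows "inside \<gamma> \<subseteq> inside (path_image (a +++ subpath 0 d g))"
proof -
  define b where "b = subpath 0 d g"
  define r where "r = subpath d 1 g"
  define \<zeta> where "\<zeta> = a +++ b"
  define \<delta> where "\<delta> = a +++ reversepath r"
  have sg: "simple_path g" and cg: "pathfinish g = pathstart g" and ig: "path_image g = \<gamma>"
    and wg: "\<forall>w\<in>inside \<gamma>. winding_number g w = -1" using g by (auto simp: cwp_def)
  have pg: "path g" using sg by (rule simple_path_imp_path)
  have g10: "g 1 = g 0" using cg by (simp add: pathfinish_def pathstart_def)
  have pb: "path b" "path r" unfolding b_def r_def by (rule path_subpath[OF pg], use d in auto)+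
  have Bg: "path_image b \<subseteq> \<gamma>" "path_image r \<subseteq> \<gamma>"
    unfolding b_def r_def using path_image_subpath_subset[of 0 d g] path_image_subpath_subset[of d 1 g] ig d by auto
  have sb: "pathstart b = g 0" "pathfinish b = g d" "pathstart r = g d" "pathfinish r = g 0"
    unfolding b_def r_def using g10 by (auto simp: pathstart_def pathfinish_def subpath_def)
  have pz: "path \<zeta>" unfolding \<zeta>_def using pa pb a1 sb by simp
  have cz: "pathfinish \<zeta> = pathstart \<zeta>" unfolding \<zeta>_def using a0 sb by simp
  have iz: "path_image \<zeta> = path_image a \<union> path_image b" unfolding \<zeta>_def
    by (rule path_image_join) (use a1 sb in simp)
  have pd: "path \<delta>" unfolding \<delta>_def using pa pb a1 sb by simp
  have cd: "pathfinish \<delta> = pathstart \<delta>" unfolding \<delta>_def using a0 sb by simp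
  have id: "path_image \<delta> = path_image a \<union> path_image r" unfolding \<delta>_def
    by (subst path_image_join) (use a1 sb in auto)
  define y where "y = g (d/2)"
  have yg: "y \<in> \<gamma>" unfolding y_def using ig d by (auto simp: path_image_def)
  have y0: "y \<noteq> g 0" unfolding y_def by (rule sp_neq[OF sg]) (use d in auto)
  have yd: "y \<noteq> g d" unfolding y_def by (rule sp_neq[OF sg]) (use d in auto)
  have yA: "y \<notin> path_image a" using Ag yg y0 yd by blast
  have yR: "y \<notin> path_image r"
  proof
    assume "y \<in> path_image r"
    then obtain x where x: "x \<in> {d..1}" "y = g x" unfolding r_def using d by (auto simp: path_image_subpath)
    have "d/2 = x" by (rule sp_inj2[OF sg]) (use x d in \<open>auto simp: y_def\<close>)
    then show False using x d by auto
  qed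
  have "open (- path_image \<delta>)" using closed_path_image[OF pd] by auto
  moreover have "y \<in> - path_image \<delta>" using yA yR id by auto
  ultimately obtain e where e: "e > 0" "ball y e \<subseteq> - path_image \<delta>" by (meson open_contains_ball)
  note J = Jordan_inside_outside[OF sg cg, unfolded ig]
  have fr: "frontier (inside \<gamma>) = \<gamma>" "frontier (outside \<gamma>) = \<gamma>" using J by blast+
  have "y \<in> closure (inside \<gamma>)" using yg fr(1) unfolding frontier_def by blast
  then obtain p where p: "p \<in> inside \<gamma>" "dist p y < e" using e(1) by (meson closure_approachable)
  have "y \<in> closure (outside \<gamma>)" using yg fr(2) unfolding frontier_def by blast
  then obtain q where q: "q \<in> outside \<gamma>" "dist q y < e" using e(1) by (meson closure_approachable)
  have pball: "p \<in> ball y e" "q \<in> ball y e" using p q by (auto simp: dist_commute)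
  have png: "p \<notin> \<gamma>" using p(1) inside_no_overlap by blast
  have qng: "q \<notin> \<gamma>" using q(1) outside_no_overlap by blast
  have pnA: "p \<notin> path_image a" "q \<notin> path_image a" using pball e(2) id by auto
  have decomp: "winding_number \<zeta> x - winding_number g x = winding_number \<delta> x"
    if x: "x \<notin> path_image a" "x \<notin> \<gamma>" for x
  proof -
    have xb: "x \<notin> path_image b" "x \<notin> path_image r" using x Bg by auto
    have A1: "winding_number \<zeta> x = winding_number a x + winding_number b x"
      unfolding \<zeta>_def by (rule winding_number_join) (use pa pb x xb a1 sb in auto)
    have "winding_number \<delta> x = winding_number a x + winding_number (reversepath r) x"
      unfolding \<delta>_def by (rule winding_number_join) (use pa pb x xb a1 sb in auto)
    moreover have "winding_number (reversepath r) x = - winding_number r x"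
      by (rule winding_number_reversepath) (use pb xb in auto)
    ultimately have A2: "winding_number \<delta> x = winding_number a x - winding_number r x" by simp
    have A3: "winding_number g x = winding_number b x + winding_number r x"
      using winding_number_subpath_combine[OF pg, of x 0 d 1] x ig d unfolding b_def r_def by simp
    show ?thesis unfolding A1 A2 A3 by (simp add: algebra_simps)
  qed
  have "winding_number \<delta> p = winding_number \<delta> q"
    by (rule winding_number_eq[OF pd cd pball(1) pball(2)]) (use e(2) in auto)
  moreover have "winding_number g p = -1" using wg p(1) by simp
  moreover have "winding_number g q = 0"
    by (rule winding_number_zero_in_outside[OF pg cg]) (use q(1) ig in simp)
  ultimately have pq: "winding_number \<zeta> q = winding_number \<zeta> p + 1"
    using decomp[OF pnA(1) png] decomp[OF pnA(2) qng] by (simp add: algebra_simps)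
  note Jz = Jordan_inside_outside[OF sz[folded b_def, folded \<zeta>_def] cz]
  have vals: "winding_number \<zeta> x = -1 \<and> x \<in> inside (path_image \<zeta>) \<or> winding_number \<zeta> x = 0"
    if x: "x \<notin> path_image \<zeta>" for x
  proof (cases "x \<in> inside (path_image \<zeta>)")
    case True then show ?thesis using wz unfolding \<zeta>_def b_def by simp
  next
    case False
    then have "x \<in> outside (path_image \<zeta>)" using Jz x by blast
    then show ?thesis using winding_number_zero_in_outside[OF pz cz] by simp
  qed
  have pnz: "p \<notin> path_image \<zeta>" "q \<notin> path_image \<zeta>" using iz pnA png qng Bg by auto
  have wp: "winding_number \<zeta> p = -1"
  proof -
    have "winding_number \<zeta> q \<noteq> 1" using vals[OF pnz(2)] by auto
    then have "winding_number \<zeta> p \<noteq> 0" using pq by auto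
    then show ?thesis using vals[OF pnz(1)] by auto
  qed
  have Iz: "inside \<gamma> \<inter> path_image \<zeta> = {}" using iz Ai Bg inside_no_overlap[of \<gamma>] by blast
  show ?thesis
  proof
    fix w assume w: "w \<in> inside \<gamma>"
    have "winding_number \<zeta> w = winding_number \<zeta> p"
      by (rule winding_number_eq[OF pz cz w p(1)]) (use J Iz in auto)
    then have "winding_number \<zeta> w \<noteq> 0" using wp by simp
    moreover have "w \<notin> path_image \<zeta>" using w Iz by blast
    ultimately show "w \<in> inside (path_image (a +++ subpath 0 d g))"
      using vals unfolding \<zeta>_def b_def by blast
  qed
qed

theorem mainTheorem2:
  fixes h :: "complex \<Rightarrow> real^3" and \<Delta> L0 L1 X :: "(real^3) set"
    and k :: nat and n :: "nat \<Rightarrow> real^3"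
  assumes disk: "oriented_disk h" and Delta: "\<Delta> = h ` cball 0 1"
    and loops: "is_loop L0" "is_loop L1" "L0 \<subseteq> \<Delta>" "L1 \<subseteq> \<Delta>"
    and nc: "non_crossing L0 L1"
    and k: "k \<in> {2, 3}"
    and n_in: "\<forall>i \<in> {1..k}. n i \<in> L0"
    and n_dist: "inj_on n {1..k}"
    and n_cw: "\<forall>i j l. 1 \<le> i \<and> i < j \<and> j < l \<and> l \<le> k \<longrightarrow> n j \<in> cw_open_seg h L0 (n i) (n l)"
    and X: "\<exists>S \<subseteq> {1..k}. X = (\<Union>m \<in> S. cw_open_seg h L0 (n m) (n (1 + m mod k)))"
    and inter: "disk_in \<Delta> L0 \<inter> disk_in \<Delta> L1 = n ` {1..k} \<union> X"
  shows "(\<forall>m \<in> {1..k}. \<not> cw_open_seg h L0 (n m) (n (1 + m mod k)) \<subseteq> X \<longrightarrow>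
            (let Z = cw_closed_seg h L0 (n m) (n (1 + m mod k)) \<union>
                     cw_closed_seg h L1 (n (1 + m mod k)) (n m)
             in is_loop Z \<and> non_crossing Z L0 \<and> non_crossing Z L1))
       \<and> (\<exists>m \<in> {1..k}. \<not> cw_open_seg h L0 (n m) (n (1 + m mod k)) \<subseteq> X \<and>
            (let Z = cw_closed_seg h L0 (n m) (n (1 + m mod k)) \<union>
                     cw_closed_seg h L1 (n (1 + m mod k)) (n m)
             in disk_in \<Delta> L0 \<union> disk_in \<Delta> L1 \<subseteq> disk_in \<Delta> Z))"
proof -
  have hc: "continuous_on (cball 0 1) h" "inj_on h (cball 0 1)" "h ` cball 0 1 \<subseteq> S2"
    using disk by (auto simp: oriented_disk_def)
  have L0D: "L0 \<subseteq> h ` cball 0 1" and L1D: "L1 \<subseteq> h ` cball 0 1" using loops Delta by auto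
  note R0 = region[OF disk loops(1) L0D]
  note R1 = region[OF disk loops(2) L1D]
  define \<gamma>0 where "\<gamma>0 = pre h L0"
  define \<gamma>1 where "\<gamma>1 = pre h L1"
  define I0 where "I0 = inside \<gamma>0"
  define I1 where "I1 = inside \<gamma>1"
  have g0cb: "\<gamma>0 \<subseteq> cball 0 1" and g1cb: "\<gamma>1 \<subseteq> cball 0 1" by (auto simp: \<gamma>0_def \<gamma>1_def pre_def)
  have I0cb: "I0 \<subseteq> cball 0 1" and I1cb: "I1 \<subseteq> cball 0 1"
    using R0(2) R1(2) by (auto simp: I0_def I1_def \<gamma>0_def \<gamma>1_def)
  obtain c0 where c0: "simple_path c0" "pathfinish c0 = pathstart c0" "path_image c0 = \<gamma>0"
    using R0(1) \<gamma>0_def by blast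
  obtain c1 where c1: "simple_path c1" "pathfinish c1 = pathstart c1" "path_image c1 = \<gamma>1"
    using R1(1) \<gamma>1_def by blast
  note J0 = Jordan_inside_outside[OF c0(1,2), unfolded c0(3), folded I0_def]
  note J1 = Jordan_inside_outside[OF c1(1,2), unfolded c1(3), folded I1_def]
  have I0g0: "I0 \<inter> \<gamma>0 = {}" "I1 \<inter> \<gamma>1 = {}" unfolding I0_def I1_def by (rule inside_no_overlap)+
  have D0: "disk_in \<Delta> L0 = h ` (I0 \<union> \<gamma>0)" using R0(5) Delta by (simp add: I0_def \<gamma>0_def)
  have D1: "disk_in \<Delta> L1 = h ` (I1 \<union> \<gamma>1)" using R1(5) Delta by (simp add: I1_def \<gamma>1_def)
  have hg0: "h ` \<gamma>0 = L0" "h ` \<gamma>1 = L1" using R0(3) R1(3) by (auto simp: \<gamma>0_def \<gamma>1_def)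
  have hinj: "\<And>x y. x \<in> cball 0 1 \<Longrightarrow> y \<in> cball 0 1 \<Longrightarrow> h x = h y \<Longrightarrow> x = y"
    using hc(2) by (meson inj_onD)
  define \<nu> where "\<nu> j = inv_into (cball 0 1) h (n j)" for j
  have \<nu>p: "\<nu> j \<in> \<gamma>0" "h (\<nu> j) = n j" "\<nu> j \<in> cball 0 1" if j: "j \<in> {1..k}" for j
  proof -
    have nj: "n j \<in> h ` cball 0 1" using n_in j L0D by blast
    show c: "\<nu> j \<in> cball 0 1" unfolding \<nu>_def by (rule inv_into_into[OF nj])
    show e: "h (\<nu> j) = n j" unfolding \<nu>_def by (rule f_inv_into_f[OF nj])
    show "\<nu> j \<in> \<gamma>0" unfolding \<gamma>0_def pre_def using c e n_in j by simp
  qed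
  have \<nu>inj: "i = j" if "i \<in> {1..k}" "j \<in> {1..k}" "\<nu> i = \<nu> j" for i j
    using n_dist that \<nu>p(2)[of i] \<nu>p(2)[of j] by (metis inj_onD)
  have k2: "2 \<le> k" "k \<le> 3" using k by auto
  have one: "1 \<in> {1..k}" "2 \<in> {1..k}" using k2 by auto
  obtain g00 where "cwp (path_image c0) g00" using cwp_exists[OF c0(1,2)] by blast
  then have "cwp \<gamma>0 g00" using c0(3) by simp
  then obtain g0 where g0: "cwp \<gamma>0 g0" "g0 0 = \<nu> 1" using cwp_at \<nu>p(1)[OF one(1)] by blast
  have sg0: "simple_path g0" and cg0: "pathfinish g0 = pathstart g0" and ig0: "path_image g0 = \<gamma>0"
    using g0(1) by (auto simp: cwp_def)
  have g010: "g0 1 = g0 0" using cg0 by (simp add: pathfinish_def pathstart_def)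
  have "\<forall>j\<in>{1..k}. \<exists>u. 0 \<le> u \<and> u < 1 \<and> g0 u = \<nu> j" using cwp_param[OF g0(1)] \<nu>p(1) by blast
  then obtain s where s: "\<And>j. j \<in> {1..k} \<Longrightarrow> 0 \<le> s j \<and> s j < 1 \<and> g0 (s j) = \<nu> j" by metis
  have s1: "s 1 = 0" using sp_inj[OF sg0, of "s 1" 0] s[OF one(1)] g0(2) by simp
  have sinj: "i = j" if "i \<in> {1..k}" "j \<in> {1..k}" "s i = s j" for i j
    using \<nu>inj[OF that(1,2)] s[OF that(1)] s[OF that(2)] that(3) by metis
  define S' where "S' j = (if j \<le> k then s j else 1)" for j
  have "s 2 \<noteq> s 1" using sinj[OF one(2) one(1)] by auto
  then have s23: "0 < s 2" using s[OF one(2)] s1 by auto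
  have s3: "k = 3 \<Longrightarrow> 0 < s 3 \<and> s 2 < s 3"
  proof -
    assume k3: "k = 3"
    have three: "3 \<in> {1..k}" using k3 by simp
    have "s 3 \<noteq> s 1" using sinj[OF three one(1)] by auto
    then have s30: "0 < s 3" using s[OF three] s1 by auto
    have n2: "n 2 \<in> cw_open_seg h L0 (n 1) (n 3)" using n_cw[rule_format, of 1 2 3] k3 by simp
    have s3b: "0 < s 3" "s 3 < 1" using s[OF three] s30 by auto
    have e1: "cw_open_seg h L0 (h (g0 0)) (h (g0 (s 3))) = h ` g0 ` {0<..<s 3}"
      by (rule seg_eq(2)[OF disk loops(1) L0D g0(1)[unfolded \<gamma>0_def] s3b])
    have e2: "h (g0 0) = n 1" using g0(2) \<nu>p(2)[OF one(1)] by simp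
    have e3: "h (g0 (s 3)) = n 3" using s[OF three] \<nu>p(2)[OF three] by simp
    have "n 2 \<in> h ` g0 ` {0<..<s 3}" using n2 e1 unfolding e2 e3 by simp
    then obtain r where r: "r \<in> {0<..<s 3}" "n 2 = h (g0 r)" by blast
    have rr: "r \<in> {0..1}" using r s3b by simp
    have "g0 r \<in> g0 ` {0..1}" using rr by (rule imageI)
    then have "g0 r \<in> \<gamma>0" using ig0 unfolding path_image_def by simp
    then have "g0 r \<in> cball 0 1" using g0cb by (rule subsetD[rotated])
    then have "g0 r = \<nu> 2" using hinj[of "g0 r" "\<nu> 2"] r(2) \<nu>p(2,3)[OF one(2)] by metis
    then have "g0 r = g0 (s 2)" using s[OF one(2)] by simp
    moreover have "r < 1" "s 2 < 1" "s 2 \<in> {0..1}" using r s3b s[OF one(2)] by auto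
    ultimately have "r = s 2" using sp_inj[OF sg0, of r "s 2"] rr by blast
    then show "0 < s 3 \<and> s 2 < s 3" using r s30 by simp
  qed
  have mono: "S' i < S' j" if "1 \<le> i" "i < j" "j \<le> k + 1" for i j
  proof -
    have sj: "\<And>j. j \<in> {1..k} \<Longrightarrow> s j < 1" using s by blast
    show ?thesis
    proof (cases "k = 2")
      case True
      then have "(i = 1 \<and> j = 2) \<or> (i = 1 \<and> j = 3) \<or> (i = 2 \<and> j = 3)" using that by auto
      then show ?thesis unfolding S'_def using True s1 s23 sj[OF one(2)] by auto
    next
      case False
      then have k3: "k = 3" using k by auto
      then have "(i = 1 \<and> j = 2) \<or> (i = 1 \<and> j = 3) \<or> (i = 1 \<and> j = 4) \<or> (i = 2 \<and> j = 3) \<or> (i = 2 \<and> j = 4) \<or> (i = 3 \<and> j = 4)"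
        using that by auto
      moreover have "s 3 < 1" using sj[of 3] k3 by simp
      ultimately show ?thesis unfolding S'_def using k3 s1 s23 s3 sj[OF one(2)] by auto
    qed
  qed
  have S'01: "0 \<le> S' j \<and> S' j \<le> 1" if "1 \<le> j" "j \<le> k + 1" for j
    using s[of j] that unfolding S'_def by auto
  have S'1: "S' 1 = 0" "S' (k+1) = 1" using s1 k2 unfolding S'_def by auto
  define p where "p m = 1 + m mod k" for m
  have pm: "p m \<in> {1..k}" "p m \<noteq> m" "m < k \<Longrightarrow> p m = m + 1" "m = k \<Longrightarrow> p m = 1"
    if m: "m \<in> {1..k}" for m
  proof -
    show "m < k \<Longrightarrow> p m = m + 1" unfolding p_def by simp
    show "m = k \<Longrightarrow> p m = 1" unfolding p_def by simp
    show "p m \<in> {1..k}" using m k2 unfolding p_def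
      by (cases "m < k") auto
    show "p m \<noteq> m" using m k2 unfolding p_def
      by (cases "m < k") auto
  qed
  have g0S: "g0 (S' m) = \<nu> m" if "m \<in> {1..k}" for m using s[OF that] that unfolding S'_def by simp
  have g0end: "g0 (S' (m+1)) = \<nu> (p m)" if m: "m \<in> {1..k}" for m
  proof (cases "m < k")
    case True
    then have "m + 1 \<in> {1..k}" by simp
    then show ?thesis using g0S pm(3)[OF m True] by simp
  next
    case False
    then have "m = k" using m by simp
    then show ?thesis using pm(4)[OF m] S'1 g010 g0(2) by simp
  qed
  define A where "A m = g0 ` {S' m..S' (m+1)}" for m
  define Ao where "Ao m = g0 ` {S' m<..<S' (m+1)}" for m
  have Aint: "0 \<le> S' m" "S' m < S' (m+1)" "S' (m+1) \<le> 1" "S' (m+1) - S' m < 1" if m: "m \<in> {1..k}" for m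
  proof -
    show "0 \<le> S' m" using S'01[of m] m by simp
    show "S' m < S' (m+1)" using mono[of m "m+1"] m by simp
    show "S' (m+1) \<le> 1" using S'01[of "m+1"] m by simp
    show "S' (m+1) - S' m < 1"
    proof (cases "m = 1")
      case True
      have "S' (m+1) < S' (k+1)" using mono[of "m+1" "k+1"] k2 True by simp
      then show ?thesis using True S'1 by simp
    next
      case False
      then have "S' 1 < S' m" using mono[of 1 m] m by simp
      then show ?thesis using S'1 S'01[of "m+1"] m by simp
    qed
  qed
  have seg0: "cw_closed_seg h L0 (n m) (n (p m)) = h ` A m \<and> cw_open_seg h L0 (n m) (n (p m)) = h ` Ao m"
    if m: "m \<in> {1..k}" for m
  proof -
    note ai = Aint[OF m]
    define gm where "gm = shiftpath (S' m) g0"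
    define tt where "tt = S' (m+1) - S' m"
    have cgm: "cwp \<gamma>0 gm" unfolding gm_def by (rule cwp_shift[OF g0(1)]) (use ai in auto)
    have tt: "0 < tt" "tt < 1" using ai unfolding tt_def by auto
    note si = shift_img[OF ai(1) less_imp_le[OF ai(2)] ai(3), of g0, folded gm_def]
    have st: "gm 0 = \<nu> m" unfolding gm_def shiftpath_def using ai g0S[OF m] by simp
    have en: "gm tt = \<nu> (p m)" using si(3) g0end[OF m] unfolding tt_def by simp
    have hst: "h (gm 0) = n m" using st \<nu>p(2)[OF m] by simp
    have hen: "h (gm tt) = n (p m)" using en \<nu>p(2)[OF pm(1)[OF m]] by simp
    note se = seg_eq[OF disk loops(1) L0D cgm[unfolded \<gamma>0_def] tt, unfolded hst hen]
    show ?thesis using se si(1,2) unfolding A_def Ao_def tt_def by simp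
  qed
  have Ag0: "A m \<subseteq> \<gamma>0" "Ao m \<subseteq> A m" if m: "m \<in> {1..k}" for m
  proof -
    have "{S' m..S' (m+1)} \<subseteq> {0..1}" using Aint[OF m] by auto
    then have "A m \<subseteq> g0 ` {0..1}" unfolding A_def by (rule image_mono)
    then show "A m \<subseteq> \<gamma>0" using ig0 unfolding path_image_def by simp
    show "Ao m \<subseteq> A m" unfolding A_def Ao_def by (rule image_mono) auto
  qed
  have Asplit: "A m = Ao m \<union> {\<nu> m, \<nu> (p m)}" if m: "m \<in> {1..k}" for m
  proof -
    have "{S' m..S' (m+1)} = {S' m<..<S' (m+1)} \<union> {S' m, S' (m+1)}" using Aint[OF m] by auto
    then show ?thesis unfolding A_def Ao_def using g0S[OF m] g0end[OF m] by (simp add: image_Un)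
  qed
  have Aoparam: "\<exists>r. S' m < r \<and> r < S' (m+1) \<and> z = g0 r" if "z \<in> Ao m" for m z
    using that unfolding Ao_def by auto
  obtain Sx where Sx: "Sx \<subseteq> {1..k}" "X = (\<Union>m \<in> Sx. cw_open_seg h L0 (n m) (n (p m)))"
    using X unfolding p_def by blast
  have Xeq: "X = (\<Union>m \<in> Sx. h ` Ao m)"
  proof -
    have "cw_open_seg h L0 (n m) (n (p m)) = h ` Ao m" if "m \<in> Sx" for m
      using seg0[of m] that Sx(1) by blast
    then show ?thesis unfolding Sx(2) by simp
  qed
  have XL0: "X \<subseteq> L0"
  proof -
    have "h ` Ao m \<subseteq> L0" if "m \<in> Sx" for m
    proof -
      have "m \<in> {1..k}" using that Sx(1) by blast
      then have "Ao m \<subseteq> \<gamma>0" using Ag0 by blast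
      then show ?thesis using hg0(1) by blast
    qed
    then show ?thesis unfolding Xeq by blast
  qed
  have Icb: "I0 \<union> \<gamma>0 \<subseteq> cball 0 1" "I1 \<union> \<gamma>1 \<subseteq> cball 0 1" using I0cb I1cb g0cb g1cb by auto
  have interp: "z \<in> (I0 \<union> \<gamma>0) \<inter> (I1 \<union> \<gamma>1) \<longleftrightarrow> h z \<in> n ` {1..k} \<union> X"
    if z: "z \<in> cball 0 1" for z
  proof
    assume "z \<in> (I0 \<union> \<gamma>0) \<inter> (I1 \<union> \<gamma>1)"
    then have "h z \<in> disk_in \<Delta> L0 \<inter> disk_in \<Delta> L1" unfolding D0 D1 by blast
    then show "h z \<in> n ` {1..k} \<union> X" using inter by simp
  next
    assume "h z \<in> n ` {1..k} \<union> X"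
    then have hz: "h z \<in> h ` (I0 \<union> \<gamma>0)" "h z \<in> h ` (I1 \<union> \<gamma>1)" using inter unfolding D0 D1 by blast+
    obtain z0 where z0: "z0 \<in> I0 \<union> \<gamma>0" "h z = h z0" using hz(1) by blast
    obtain z1 where z1: "z1 \<in> I1 \<union> \<gamma>1" "h z = h z1" using hz(2) by blast
    have "z = z0" using hinj[OF z _ z0(2)] z0(1) Icb(1) by blast
    moreover have "z = z1" using hinj[OF z _ z1(2)] z1(1) Icb(2) by blast
    ultimately show "z \<in> (I0 \<union> \<gamma>0) \<inter> (I1 \<union> \<gamma>1)" using z0 z1 by blast
  qed
  have nL0: "n ` {1..k} \<union> X \<subseteq> L0" using n_in XL0 by blast
  have M0: "(I0 \<union> \<gamma>0) \<inter> (I1 \<union> \<gamma>1) \<subseteq> \<gamma>0"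
  proof
    fix z assume z: "z \<in> (I0 \<union> \<gamma>0) \<inter> (I1 \<union> \<gamma>1)"
    then have zc: "z \<in> cball 0 1" using Icb by blast
    then have "h z \<in> L0" using interp[OF zc] z nL0 by blast
    then show "z \<in> \<gamma>0" using zc unfolding \<gamma>0_def pre_def by simp
  qed
  have dis1: "\<gamma>0 \<inter> I1 = {}"
  proof (rule ccontr)
    assume "\<gamma>0 \<inter> I1 \<noteq> {}"
    then obtain z where z: "z \<in> \<gamma>0" "z \<in> I1" by blast
    have "open I1" using J1 by blast
    then obtain e where e: "e > 0" "ball z e \<subseteq> I1" using z(2) by (meson open_contains_ball)
    have "frontier I0 = \<gamma>0" using J0 by blast
    then have "z \<in> closure I0" using z(1) unfolding frontier_def by blast
    then obtain w where w: "w \<in> I0" "dist w z < e" using e(1) by (meson closure_approachable)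
    have "w \<in> ball z e" using w(2) by (simp add: dist_commute)
    then have "w \<in> I1" using e(2) by blast
    then have "w \<in> \<gamma>0" using M0 w(1) by blast
    then show False using w(1) I0g0(1) by blast
  qed
  have dis2: "I0 \<inter> \<gamma>1 = {}" "I0 \<inter> I1 = {}" using M0 I0g0(1) by blast+
  have M1: "(I0 \<union> \<gamma>0) \<inter> (I1 \<union> \<gamma>1) \<subseteq> \<gamma>1" using M0 dis1 by blast
  have \<nu>g1: "\<nu> j \<in> \<gamma>1" if j: "j \<in> {1..k}" for j
  proof -
    have "h (\<nu> j) \<in> n ` {1..k} \<union> X" using \<nu>p(2)[OF j] j by blast
    then have "\<nu> j \<in> (I0 \<union> \<gamma>0) \<inter> (I1 \<union> \<gamma>1)" using interp[OF \<nu>p(3)[OF j]] by blast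
    then show ?thesis using M1 by blast
  qed
  have Xg1: "z \<in> \<gamma>1" if "z \<in> cball 0 1" "h z \<in> X" for z
  proof -
    have "z \<in> (I0 \<union> \<gamma>0) \<inter> (I1 \<union> \<gamma>1)" using interp[OF that(1)] that(2) by blast
    then show ?thesis using M1 by blast
  qed
  have I0out1: "I0 \<subseteq> outside \<gamma>1"
  proof
    fix w assume w: "w \<in> I0"
    have "w \<notin> \<gamma>1" "w \<notin> I1" using w dis2 by blast+
    moreover have "inside \<gamma>1 \<union> outside \<gamma>1 = - \<gamma>1" using J1 I1_def by blast
    ultimately show "w \<in> outside \<gamma>1" unfolding I1_def by blast
  qed
  obtain g11 where "cwp (path_image c1) g11" using cwp_exists[OF c1(1,2)] by blast
  then have "cwp \<gamma>1 g11" using c1(3) by simp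
  then obtain g1 where g1: "cwp \<gamma>1 g1" "g1 0 = \<nu> 1" using cwp_at \<nu>g1[OF one(1)] by blast
  have sg1: "simple_path g1" and cg1: "pathfinish g1 = pathstart g1" and ig1: "path_image g1 = \<gamma>1"
    using g1(1) by (auto simp: cwp_def)
  have g110: "g1 1 = g1 0" using cg1 by (simp add: pathfinish_def pathstart_def)
  have "\<forall>j\<in>{1..k}. \<exists>u. 0 \<le> u \<and> u < 1 \<and> g1 u = \<nu> j" using cwp_param[OF g1(1)] \<nu>g1 by blast
  then obtain t where t: "\<And>j. j \<in> {1..k} \<Longrightarrow> 0 \<le> t j \<and> t j < 1 \<and> g1 (t j) = \<nu> j" by metis
  have t1: "t 1 = 0" using sp_inj[OF sg1, of "t 1" 0] t[OF one(1)] g1(2) by simp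
  have tinj: "i = j" if "i \<in> {1..k}" "j \<in> {1..k}" "t i = t j" for i j
    using \<nu>inj[OF that(1,2)] t[OF that(1)] t[OF that(2)] that(3) by metis
  define d where "d m = (if t (p m) < t m then t m - t (p m) else 1 + t m - t (p m))" for m
  define gm where "gm m = shiftpath (t (p m)) g1" for m
  have gmp: "cwp \<gamma>1 (gm m)" "gm m 0 = \<nu> (p m)" "0 < d m" "d m < 1" "gm m (d m) = \<nu> m"
    if m: "m \<in> {1..k}" for m
  proof -
    note pm1 = pm(1)[OF m]
    have tp: "0 \<le> t (p m)" "t (p m) < 1" "g1 (t (p m)) = \<nu> (p m)" using t[OF pm1] by auto
    have tm: "0 \<le> t m" "t m < 1" "g1 (t m) = \<nu> m" using t[OF m] by auto
    have ne: "t (p m) \<noteq> t m" using tinj[OF pm1 m] pm(2)[OF m] by blast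
    show "cwp \<gamma>1 (gm m)" unfolding gm_def by (rule cwp_shift[OF g1(1)]) (use tp in auto)
    show "gm m 0 = \<nu> (p m)" unfolding gm_def shiftpath_def using tp by simp
    show "0 < d m" "d m < 1" unfolding d_def using tp tm ne by auto
    show "gm m (d m) = \<nu> m"
    proof (cases "t (p m) < t m")
      case True
      then show ?thesis unfolding gm_def d_def shiftpath_def using tm by simp
    next
      case False
      then have dd: "t (p m) + d m = 1 + t m" unfolding d_def by simp
      show ?thesis
      proof (cases "t m = 0")
        case True
        then have "gm m (d m) = g1 1" unfolding gm_def shiftpath_def dd by simp
        then show ?thesis using g110 True tm by simp
      next
        case False
        then have "t m > 0" using tm by simp
        then have "gm m (d m) = g1 (t m)" unfolding gm_def shiftpath_def dd by simp
        then show ?thesis using tm by simp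
      qed
    qed
  qed
  define a where "a m = subpath (S' m) (S' (m+1)) g0" for m
  define b where "b m = subpath 0 (d m) (gm m)" for m
  define B where "B m = gm m ` {0..d m}" for m
  define \<zeta> where "\<zeta> m = a m +++ b m" for m
  have pg0: "path g0" using sg0 by (rule simple_path_imp_path)
  have apr: "path (a m)" "path_image (a m) = A m" "pathstart (a m) = \<nu> m" "pathfinish (a m) = \<nu> (p m)"
    "arc (a m)" if m: "m \<in> {1..k}" for m
  proof -
    note ai = Aint[OF m]
    have i: "S' m \<in> {0..1}" "S' (m+1) \<in> {0..1}" using ai by auto
    show "path (a m)" unfolding a_def by (rule path_subpath[OF pg0 i])
    show "path_image (a m) = A m" unfolding a_def A_def using ai by (simp add: path_image_subpath)
    show "pathstart (a m) = \<nu> m" unfolding a_def using g0S[OF m] by simp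
    show "pathfinish (a m) = \<nu> (p m)" unfolding a_def using g0end[OF m] by simp
    have "\<nu> m \<noteq> \<nu> (p m)" using \<nu>inj[OF m pm(1)[OF m]] pm(2)[OF m] by metis
    then have ne: "g0 (S' m) \<noteq> g0 (S' (m+1))" using g0S[OF m] g0end[OF m] by simp
    show "arc (a m)" unfolding a_def by (rule arc_simple_path_subpath[OF sg0 i ne])
  qed
  have bpr: "path (b m)" "path_image (b m) = B m" "pathstart (b m) = \<nu> (p m)" "pathfinish (b m) = \<nu> m"
    "arc (b m)" "B m \<subseteq> \<gamma>1" if m: "m \<in> {1..k}" for m
  proof -
    note gg = gmp[OF m]
    have sgm: "simple_path (gm m)" and igm: "path_image (gm m) = \<gamma>1" using gg(1) by (auto simp: cwp_def)
    have i: "0 \<in> {0..1::real}" "d m \<in> {0..1}" using gg by auto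
    show "path (b m)" unfolding b_def by (rule path_subpath[OF simple_path_imp_path[OF sgm] i])
    show "path_image (b m) = B m" unfolding b_def B_def using gg by (simp add: path_image_subpath)
    show "pathstart (b m) = \<nu> (p m)" unfolding b_def using gg by simp
    show "pathfinish (b m) = \<nu> m" unfolding b_def using gg by simp
    have "\<nu> m \<noteq> \<nu> (p m)" using \<nu>inj[OF m pm(1)[OF m]] pm(2)[OF m] by metis
    then have ne: "gm m 0 \<noteq> gm m (d m)" using gg by simp
    show "arc (b m)" unfolding b_def by (rule arc_simple_path_subpath[OF sgm i ne])
    have "B m \<subseteq> gm m ` {0..1}" unfolding B_def by (rule image_mono) (use gg in auto)
    then show "B m \<subseteq> \<gamma>1" using igm unfolding path_image_def by simp
  qed
  have seg1: "cw_closed_seg h L1 (n (p m)) (n m) = h ` B m" if m: "m \<in> {1..k}" for m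
  proof -
    note gg = gmp[OF m]
    have hst: "h (gm m 0) = n (p m)" using gg(2) \<nu>p(2)[OF pm(1)[OF m]] by simp
    have hen: "h (gm m (d m)) = n m" using gg(5) \<nu>p(2)[OF m] by simp
    show ?thesis using seg_eq(1)[OF disk loops(2) L1D gg(1)[unfolded \<gamma>1_def] gg(3,4)] unfolding hst hen B_def .
  qed
  have zpr: "path (\<zeta> m)" "pathfinish (\<zeta> m) = pathstart (\<zeta> m)" "path_image (\<zeta> m) = A m \<union> B m"
    "path_image (\<zeta> m) \<subseteq> \<gamma>0 \<union> \<gamma>1" "path_image (\<zeta> m) \<subseteq> cball 0 1"
    "cw_closed_seg h L0 (n m) (n (p m)) \<union> cw_closed_seg h L1 (n (p m)) (n m) = h ` path_image (\<zeta> m)"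
    if m: "m \<in> {1..k}" for m
  proof -
    note A1 = apr[OF m] and B1 = bpr[OF m]
    show "path (\<zeta> m)" unfolding \<zeta>_def using A1 B1 by simp
    show "pathfinish (\<zeta> m) = pathstart (\<zeta> m)" unfolding \<zeta>_def using A1 B1 by simp
    show pz: "path_image (\<zeta> m) = A m \<union> B m" unfolding \<zeta>_def
      using path_image_join[of "a m" "b m"] A1 B1 by simp
    show "path_image (\<zeta> m) \<subseteq> \<gamma>0 \<union> \<gamma>1" unfolding pz using Ag0[OF m] B1(6) by blast
    then show "path_image (\<zeta> m) \<subseteq> cball 0 1" using g0cb g1cb by blast
    show "cw_closed_seg h L0 (n m) (n (p m)) \<union> cw_closed_seg h L1 (n (p m)) (n m) = h ` path_image (\<zeta> m)"
      unfolding pz image_Un using seg0[OF m] seg1[OF m] by simp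
  qed
  have valid_dis: "Ao m \<inter> \<gamma>1 = {}"
    if m: "m \<in> {1..k}" and v: "\<not> cw_open_seg h L0 (n m) (n (p m)) \<subseteq> X" for m
  proof (rule ccontr)
    assume "Ao m \<inter> \<gamma>1 \<noteq> {}"
    then obtain z where z: "z \<in> Ao m" "z \<in> \<gamma>1" by blast
    obtain r where r: "S' m < r" "r < S' (m+1)" "z = g0 r" using Aoparam[OF z(1)] by blast
    note ai = Aint[OF m]
    have r01: "r \<in> {0<..<1}" using r ai by auto
    have zg0: "z \<in> \<gamma>0" using z(1) Ag0[OF m] by blast
    have zc: "z \<in> cball 0 1" using zg0 g0cb by blast
    have "z \<in> (I0 \<union> \<gamma>0) \<inter> (I1 \<union> \<gamma>1)" using zg0 z(2) by blast
    then have "h z \<in> n ` {1..k} \<union> X" using interp[OF zc] by blast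
    then show False
    proof
      assume "h z \<in> n ` {1..k}"
      then obtain j where j: "j \<in> {1..k}" "h z = n j" by blast
      have "z = \<nu> j" using hinj[OF zc \<nu>p(3)[OF j(1)]] j(2) \<nu>p(2)[OF j(1)] by simp
      then have "g0 r = g0 (S' j)" using r(3) g0S[OF j(1)] by simp
      then have "r = S' j" using sp_inj2[OF sg0 r01, of "S' j"] S'01[of j] j(1) by auto
      moreover have "S' j \<le> S' m \<or> S' (m+1) \<le> S' j"
      proof (cases "j \<le> m")
        case True
        then show ?thesis using mono[of j m] j(1) m by (cases "j = m") auto
      next
        case False
        then show ?thesis using mono[of "m+1" j] j(1) m by (cases "j = m + 1") auto
      qed
      ultimately show False using r by auto
    next
      assume "h z \<in> X"
      then obtain j where j: "j \<in> Sx" "h z \<in> h ` Ao j" unfolding Xeq by blast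
      have j1: "j \<in> {1..k}" using j(1) Sx(1) by blast
      obtain z' where z': "z' \<in> Ao j" "h z = h z'" using j(2) by blast
      have "z' \<in> cball 0 1" using z' Ag0[OF j1] g0cb by blast
      then have zz: "z = z'" using hinj[OF zc] z'(2) by simp
      show False
      proof (cases "j = m")
        case True
        have "cw_open_seg h L0 (n m) (n (p m)) \<subseteq> X" using seg0[OF m] j(1) True unfolding Xeq by blast
        then show False using v by blast
      next
        case False
        obtain r' where r': "S' j < r'" "r' < S' (j+1)" "z = g0 r'" using Aoparam[OF z'(1)] zz by blast
        have "r' \<in> {0..1}" using r' Aint[OF j1] by auto
        then have "r = r'" using sp_inj2[OF sg0 r01, of r'] r(3) r'(3) by simp
        moreover have "S' (j+1) \<le> S' m \<or> S' (m+1) \<le> S' j"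
        proof (cases "j < m")
          case True
          then show ?thesis using mono[of "j+1" m] j1 m by (cases "j + 1 = m") auto
        next
          case False
          then have "m < j" using \<open>j \<noteq> m\<close> by simp
          then show ?thesis using mono[of "m+1" j] j1 m by (cases "j = m + 1") auto
        qed
        ultimately show False using r r' by auto
      qed
    qed
  qed
  have valid_simple: "simple_path (\<zeta> m)"
    if m: "m \<in> {1..k}" and v: "\<not> cw_open_seg h L0 (n m) (n (p m)) \<subseteq> X" for m
  proof -
    note A1 = apr[OF m] and B1 = bpr[OF m]
    have "A m \<inter> B m \<subseteq> {\<nu> m, \<nu> (p m)}" using Asplit[OF m] valid_dis[OF m v] B1(6) by blast
    then show ?thesis unfolding \<zeta>_def
      by (intro simple_path_join_loop) (use A1 B1 in auto)
  qed
  have invalid_sub: "path_image (\<zeta> m) \<subseteq> \<gamma>1"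
    if m: "m \<in> {1..k}" and v: "cw_open_seg h L0 (n m) (n (p m)) \<subseteq> X" for m
  proof -
    have "Ao m \<subseteq> \<gamma>1"
    proof
      fix z assume z: "z \<in> Ao m"
      have zc: "z \<in> cball 0 1" using z Ag0[OF m] g0cb by blast
      have "h z \<in> X" using z v seg0[OF m] by blast
      then show "z \<in> \<gamma>1" by (rule Xg1[OF zc])
    qed
    then have "A m \<subseteq> \<gamma>1" using Asplit[OF m] \<nu>g1[OF m] \<nu>g1[OF pm(1)[OF m]] by blast
    then show ?thesis using zpr(3)[OF m] bpr(6)[OF m] by blast
  qed
  have pk: "1 + m mod k = p m" for m unfolding p_def ..
  have conj1: "\<forall>m \<in> {1..k}. \<not> cw_open_seg h L0 (n m) (n (1 + m mod k)) \<subseteq> X \<longrightarrow>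
            (let Z = cw_closed_seg h L0 (n m) (n (1 + m mod k)) \<union>
                     cw_closed_seg h L1 (n (1 + m mod k)) (n m)
             in is_loop Z \<and> non_crossing Z L0 \<and> non_crossing Z L1)"
  proof (intro ballI impI)
    fix m assume m: "m \<in> {1..k}" and v0: "\<not> cw_open_seg h L0 (n m) (n (1 + m mod k)) \<subseteq> X"
    have v: "\<not> cw_open_seg h L0 (n m) (n (p m)) \<subseteq> X" using v0 unfolding pk .
    note zz = zpr[OF m]
    have sz: "simple_path (\<zeta> m)" by (rule valid_simple[OF m v])
    note lp = loop_from_path[OF disk sz zz(2) zz(5)]
    define Z where "Z = h ` path_image (\<zeta> m)"
    have ZS2: "Z \<subseteq> S2" using lp(1) unfolding Z_def is_loop_def by blast
    have nI: "Z \<inter> h ` I = {}" if I: "I \<subseteq> cball 0 1" "I \<inter> (\<gamma>0 \<union> \<gamma>1) = {}" for I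
    proof (rule ccontr)
      assume "Z \<inter> h ` I \<noteq> {}"
      then obtain z i where zi: "z \<in> path_image (\<zeta> m)" "i \<in> I" "h z = h i" unfolding Z_def by blast
      have "z = i" using hinj[of z i] zi zz(5) I(1) by blast
      then show False using zi zz(4) I(2) by blast
    qed
    have nc0: "non_crossing Z L0"
    proof -
      have "S2 - h ` I0 \<in> loop_regions L0" using R0(4) unfolding I0_def \<gamma>0_def by simp
      moreover have "Z \<subseteq> S2 - h ` I0" using ZS2 nI[OF I0cb] I0g0(1) dis2(1) by blast
      ultimately show ?thesis unfolding non_crossing_def by blast
    qed
    have nc1: "non_crossing Z L1"
    proof -
      have "S2 - h ` I1 \<in> loop_regions L1" using R1(4) unfolding I1_def \<gamma>1_def by simp
      moreover have "Z \<subseteq> S2 - h ` I1" using ZS2 nI[OF I1cb] I0g0(2) dis1 by blast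
      ultimately show ?thesis unfolding non_crossing_def by blast
    qed
    show "let Z = cw_closed_seg h L0 (n m) (n (1 + m mod k)) \<union> cw_closed_seg h L1 (n (1 + m mod k)) (n m)
             in is_loop Z \<and> non_crossing Z L0 \<and> non_crossing Z L1"
      unfolding pk zz(6) Let_def using lp(1) nc0 nc1 unfolding Z_def by blast
  qed
  obtain w0 where w0: "w0 \<in> I0" using J0 by blast
  have w0n: "w0 \<notin> \<gamma>0" "w0 \<notin> \<gamma>1" using w0 I0g0(1) dis2(1) by blast+
  have pg1: "path g1" using sg1 by (rule simple_path_imp_path)
  have wg1: "winding_number g1 w0 = 0"
    by (rule winding_number_zero_in_outside[OF pg1 cg1]) (use I0out1 w0 ig1 in blast)
  have wg0: "winding_number g0 w0 = -1" using g0(1) w0 unfolding cwp_def I0_def by blast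
  define V where "V x = winding_number (subpath 0 x g0) w0" for x
  define W where "W x = winding_number (subpath 0 x g1) w0" for x
  have w0nz: "w0 \<notin> path_image (\<zeta> m)" if m: "m \<in> {1..k}" for m using zpr(4)[OF m] w0n by blast
  have wz: "winding_number (\<zeta> m) w0 = (V (S' (m+1)) - V (S' m)) + (W (t m) - W (t (p m)))"
    if m: "m \<in> {1..k}" for m
  proof -
    note A1 = apr[OF m] and B1 = bpr[OF m]
    have wa: "w0 \<notin> path_image (a m)" using A1(2) Ag0[OF m] w0n by blast
    have wb: "w0 \<notin> path_image (b m)" using B1(2) B1(6) w0n by blast
    have "winding_number (\<zeta> m) w0 = winding_number (a m) w0 + winding_number (b m) w0"
      unfolding \<zeta>_def by (rule winding_number_join) (use A1 B1 wa wb in auto)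
    moreover have "winding_number (a m) w0 = V (S' (m+1)) - V (S' m)"
      unfolding a_def V_def by (rule wind_sub_diff[OF pg0]) (use w0n ig0 Aint[OF m] in auto)
    moreover have "winding_number (b m) w0 = W (t m) - W (t (p m))"
    proof -
      have tp: "0 \<le> t (p m)" "t (p m) < 1" using t[OF pm(1)[OF m]] by auto
      have tm: "0 \<le> t m" "t m < 1" using t[OF m] by auto
      have ne: "t (p m) \<noteq> t m" using tinj[OF pm(1)[OF m] m] pm(2)[OF m] by blast
      have "winding_number (b m) w0 = W (t m) - W (t (p m)) + (if t (p m) < t m then 0 else winding_number g1 w0)"
        unfolding b_def gm_def W_def
        by (rule wind_shiftsub[OF pg1 cg1 _ tp tm ne d_def]) (use w0n ig1 in simp)
      then show ?thesis using wg1 by simp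
    qed
    ultimately show ?thesis by simp
  qed
  have V01: "V (S' 1) = 0" "V (S' (k+1)) = -1"
  proof -
    have "w0 \<noteq> g0 0" using w0n(1) g0(2) \<nu>p(1)[OF one(1)] by auto
    then show "V (S' 1) = 0" unfolding S'1 V_def by (rule winding_number_subpath_trivial)
    show "V (S' (k+1)) = -1" unfolding S'1 V_def using wg0 by simp
  qed
  have sum: "(\<Sum>m\<in>{1..k}. winding_number (\<zeta> m) w0) = -1"
  proof (cases "k = 2")
    case True
    have "p 1 = 2" "p 2 = 1" unfolding p_def True by auto
    then show ?thesis using wz[of 1] wz[of 2] V01 True by (simp add: numeral_2_eq_2)
  next
    case False
    then have k3: "k = 3" using k by auto
    have "p 1 = 2" "p 2 = 3" "p 3 = 1" unfolding p_def k3 by auto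
    then show ?thesis using wz[of 1] wz[of 2] wz[of 3] V01 k3 by (simp add: numeral_3_eq_3 numeral_2_eq_2)
  qed
  have vals: "winding_number (\<zeta> m) w0 \<in> {-1, 0, 1}" "cw_open_seg h L0 (n m) (n (p m)) \<subseteq> X \<Longrightarrow> winding_number (\<zeta> m) w0 = 0"
    if m: "m \<in> {1..k}" for m
  proof -
    note zz = zpr[OF m]
    show inv: "winding_number (\<zeta> m) w0 = 0" if v: "cw_open_seg h L0 (n m) (n (p m)) \<subseteq> X"
    proof -
      have "outside \<gamma>1 \<subseteq> outside (path_image (\<zeta> m))" by (rule outside_mono[OF invalid_sub[OF m v]])
      then have "w0 \<in> outside (path_image (\<zeta> m))" using I0out1 w0 by blast
      then show ?thesis by (rule winding_number_zero_in_outside[OF zz(1,2)])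
    qed
    show "winding_number (\<zeta> m) w0 \<in> {-1, 0, 1}"
    proof (cases "cw_open_seg h L0 (n m) (n (p m)) \<subseteq> X")
      case True then show ?thesis using inv by simp
    next
      case False
      have sz: "simple_path (\<zeta> m)" by (rule valid_simple[OF m False])
      note Jz = Jordan_inside_outside[OF sz zz(2)]
      show ?thesis
      proof (cases "w0 \<in> inside (path_image (\<zeta> m))")
        case True
        then show ?thesis by (cases rule: simple_closed_path_winding_number_inside[OF sz]) auto
      next
        case False
        then have "w0 \<in> outside (path_image (\<zeta> m))" using Jz w0nz[OF m] by blast
        then show ?thesis using winding_number_zero_in_outside[OF zz(1,2)] by simp
      qed
    qed
  qed
  have "\<exists>m\<in>{1..k}. winding_number (\<zeta> m) w0 = -1"
  proof (rule ccontr)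
    assume "\<not> ?thesis"
    then have nv: "\<And>m. m \<in> {1..k} \<Longrightarrow> winding_number (\<zeta> m) w0 \<in> {0, 1}" using vals by blast
    have "Re (\<Sum>m\<in>{1..k}. winding_number (\<zeta> m) w0) = (\<Sum>m\<in>{1..k}. Re (winding_number (\<zeta> m) w0))"
      by (rule Re_sum)
    also have "\<dots> \<ge> 0" by (rule sum_nonneg) (use nv in force)
    finally have "0 \<le> Re (\<Sum>m\<in>{1..k}. winding_number (\<zeta> m) w0)" .
    moreover have "Re (\<Sum>m\<in>{1..k}. winding_number (\<zeta> m) w0) = -1" unfolding sum by simp
    ultimately show False by simp
  qed
  then obtain m where m: "m \<in> {1..k}" and wm: "winding_number (\<zeta> m) w0 = -1" by blast
  have v: "\<not> cw_open_seg h L0 (n m) (n (p m)) \<subseteq> X" using vals(2)[OF m] wm by auto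
  note zz = zpr[OF m]
  have sz: "simple_path (\<zeta> m)" by (rule valid_simple[OF m v])
  note Jz = Jordan_inside_outside[OF sz zz(2)]
  have w0in: "w0 \<in> inside (path_image (\<zeta> m))"
  proof (rule ccontr)
    assume "w0 \<notin> inside (path_image (\<zeta> m))"
    then have "w0 \<in> outside (path_image (\<zeta> m))" using Jz w0nz[OF m] by blast
    then have "winding_number (\<zeta> m) w0 = 0" by (rule winding_number_zero_in_outside[OF zz(1,2)])
    then show False using wm by simp
  qed
  have wzin: "\<forall>w\<in>inside (path_image (\<zeta> m)). winding_number (\<zeta> m) w = -1"
  proof (cases rule: simple_closed_path_winding_number_inside[OF sz])
    case 1
    then have "winding_number (\<zeta> m) w0 = 1" using w0in by blast
    then show ?thesis using wm by simp
  next
    case 2 then show ?thesis by blast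
  qed
  have inZ: "w \<in> inside (path_image (\<zeta> m))" if "w \<notin> path_image (\<zeta> m)" "winding_number (\<zeta> m) w \<noteq> 0" for w
  proof (rule ccontr)
    assume "w \<notin> inside (path_image (\<zeta> m))"
    then have "w \<in> outside (path_image (\<zeta> m))" using Jz that(1) by blast
    then show False using winding_number_zero_in_outside[OF zz(1,2)] that(2) by blast
  qed
  have I0z: "I0 \<subseteq> inside (path_image (\<zeta> m))"
  proof
    fix w assume w: "w \<in> I0"
    have dz: "I0 \<inter> path_image (\<zeta> m) = {}" using zz(4) I0g0(1) dis2(1) by blast
    have "winding_number (\<zeta> m) w = winding_number (\<zeta> m) w0"
      by (rule winding_number_eq[OF zz(1,2) w w0]) (use J0 dz in auto)
    then show "w \<in> inside (path_image (\<zeta> m))" using inZ[of w] wm dz w by auto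
  qed
  have I1z: "I1 \<subseteq> inside (path_image (\<zeta> m))"
  proof -
    note gg = gmp[OF m] and A1 = apr[OF m]
    have st: "pathstart (a m) = gm m (d m)" "pathfinish (a m) = gm m 0" using A1 gg by auto
    have Ag: "path_image (a m) \<inter> \<gamma>1 \<subseteq> {gm m 0, gm m (d m)}"
      using A1(2) Asplit[OF m] valid_dis[OF m v] gg by auto
    have Ai: "path_image (a m) \<inter> inside \<gamma>1 = {}" using A1(2) Ag0[OF m] dis1 unfolding I1_def by blast
    have e: "\<zeta> m = a m +++ subpath 0 (d m) (gm m)" unfolding \<zeta>_def b_def ..
    have "inside \<gamma>1 \<subseteq> inside (path_image (a m +++ subpath 0 (d m) (gm m)))"
      by (rule local_side[OF gg(1) gg(3,4) A1(1) st Ag Ai]) (use sz wzin e in simp_all)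
    then show ?thesis unfolding I1_def e .
  qed
  have clz: "closure (inside (path_image (\<zeta> m))) = inside (path_image (\<zeta> m)) \<union> path_image (\<zeta> m)"
    using Jz by (simp add: closure_Un_frontier)
  have cl0: "I0 \<union> \<gamma>0 \<subseteq> inside (path_image (\<zeta> m)) \<union> path_image (\<zeta> m)"
  proof -
    have "closure I0 = I0 \<union> \<gamma>0" using J0 by (simp add: closure_Un_frontier)
    moreover have "closure I0 \<subseteq> closure (inside (path_image (\<zeta> m)))" by (rule closure_mono[OF I0z])
    ultimately show ?thesis using clz by simp
  qed
  have cl1: "I1 \<union> \<gamma>1 \<subseteq> inside (path_image (\<zeta> m)) \<union> path_image (\<zeta> m)"
  proof -
    have "closure I1 = I1 \<union> \<gamma>1" using J1 by (simp add: closure_Un_frontier)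
    moreover have "closure I1 \<subseteq> closure (inside (path_image (\<zeta> m)))" by (rule closure_mono[OF I1z])
    ultimately show ?thesis using clz by simp
  qed
  note lp = loop_from_path[OF disk sz zz(2) zz(5)]
  have ZD: "h ` path_image (\<zeta> m) \<subseteq> h ` cball 0 1" using zz(5) by blast
  have dZ: "disk_in \<Delta> (h ` path_image (\<zeta> m)) = h ` (inside (path_image (\<zeta> m)) \<union> path_image (\<zeta> m))"
    using region(5)[OF disk lp(1) ZD] unfolding lp(2) Delta .
  have conj2: "\<exists>m \<in> {1..k}. \<not> cw_open_seg h L0 (n m) (n (1 + m mod k)) \<subseteq> X \<and>
            (let Z = cw_closed_seg h L0 (n m) (n (1 + m mod k)) \<union>
                     cw_closed_seg h L1 (n (1 + m mod k)) (n m)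
             in disk_in \<Delta> L0 \<union> disk_in \<Delta> L1 \<subseteq> disk_in \<Delta> Z)"
  proof (rule bexI[OF _ m])
    have "disk_in \<Delta> L0 \<union> disk_in \<Delta> L1 \<subseteq> disk_in \<Delta> (h ` path_image (\<zeta> m))"
      unfolding D0 D1 dZ using cl0 cl1 by blast
    then show "\<not> cw_open_seg h L0 (n m) (n (1 + m mod k)) \<subseteq> X \<and>
            (let Z = cw_closed_seg h L0 (n m) (n (1 + m mod k)) \<union>
                     cw_closed_seg h L1 (n (1 + m mod k)) (n m)
             in disk_in \<Delta> L0 \<union> disk_in \<Delta> L1 \<subseteq> disk_in \<Delta> Z)"
      unfolding pk Let_def zz(6) using v by blast
  qed
  show ?thesis using conj1 conj2 by blast
qed

end
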